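(* Let $E,F$ be vector lattices with $F$ Dedekind complete. Then for all $S,T\in\mathcal{U}_+(E,F)$ and $x\in E$, \[ (\pi_ST)x=\sup_{\varepsilon>0}\ \inf_{y\in\mathcal{F}_x,\ \rho\in\mathfrak{P}(F)}\{\rho Ty+\rho^\perp Tx:\ \rho S(x-y)\le\varepsilon Sx\}, \] \[ (\pi_S^\perp T)x=\inf_{\varepsilon>0}\ \sup_{y\in\mathcal{F}_x,\ \rho\in\mathfrak{P}(F)}\{\rho Ty:\ \rho Sy\le\varepsilon Sx\}. \]
   Context: For a vector lattice $E$, an element $z$ is a fragment of $x\in E$ if $|z|\wedge|x-z|=0$; $\mathcal{F}_x$ denotes the set of fragments of $x$. An operator $T\colon E\to F$ is orthogonally additive if $T(x+y)=Tx+Ty$ whenever $|x|\wedge|y|=0$. $\mathcal{U}(E,F)$ is the set of orthogonally additive, order bounded operators $E\to F$, ordered by $S\le T$ iff $Tx-Sx\ge0$ for all $x$; $\mathcal{U}_+(E,F)$ is its positive cone; for Dedekind complete $F$ it is a Dedekind complete vector lattice. $\mathfrak{P}(F)$ is the Boolean algebra of band projections of $F$, $\rho^\perp=I_F-\rho$. For $S\in\mathcal{U}_+(E,F)$, $\pi_S$ and $\pi_S^\perp$ denote the band projections in $\mathcal{U}(E,F)$ onto $\{S\}^{\perp\perp}$ and $\{S\}^\perp$. *)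

theory Defs
  imports Complex_Main
begin

text \<open>Dedekind completeness of F is expressed by additionally requiring the type class
  conditionally_complete_lattice (every nonempty bounded above set has a supremum,
  every nonempty bounded below set has an infimum).\<close>

class vector_lattice = ordered_real_vector + lattice

definition vabs :: "'a::vector_lattice \<Rightarrow> 'a" where
  "vabs x = sup x (- x)"

definition vdisj :: "'a::vector_lattice \<Rightarrow> 'a \<Rightarrow> bool" where
  "vdisj x y \<longleftrightarrow> inf (vabs x) (vabs y) = 0"

definition fragments :: "'a::vector_lattice \<Rightarrow> 'a set" where
  "fragments x = {z. vdisj z (x - z)}"

definition orth_additive :: "('a::vector_lattice \<Rightarrow> 'b::vector_lattice) \<Rightarrow> bool" where
  "orth_additive T \<longleftrightarrow> (\<forall>x y. vdisj x y \<longrightarrow> T (x + y) = T x + T y)"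

definition order_bounded_set :: "'a::order set \<Rightarrow> bool" where
  "order_bounded_set A \<longleftrightarrow> (\<exists>a b. A \<subseteq> {a..b})"

definition order_bounded_op :: "('a::vector_lattice \<Rightarrow> 'b::vector_lattice) \<Rightarrow> bool" where
  "order_bounded_op T \<longleftrightarrow> (\<forall>A. order_bounded_set A \<longrightarrow> order_bounded_set (T ` A))"

text \<open>The set U(E,F), ordered pointwise (S \<le> T iff Tx - Sx \<ge> 0 for all x, i.e. the function order).\<close>
definition UOp :: "('a::vector_lattice \<Rightarrow> 'b::vector_lattice) set" where
  "UOp = {T. orth_additive T \<and> order_bounded_op T}"

definition UOp_pos :: "('a::vector_lattice \<Rightarrow> 'b::vector_lattice) set" where
  "UOp_pos = {T \<in> UOp. \<forall>x. 0 \<le> T x}"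

text \<open>Lattice operations of U(E,F) are taken with respect to its own order (least upper
  bounds / greatest lower bounds inside U(E,F)), not pointwise.\<close>
definition U_is_sup :: "('a::vector_lattice \<Rightarrow> 'b::vector_lattice) \<Rightarrow> ('a \<Rightarrow> 'b) \<Rightarrow> ('a \<Rightarrow> 'b) \<Rightarrow> bool" where
  "U_is_sup f g h \<longleftrightarrow> h \<in> UOp \<and> f \<le> h \<and> g \<le> h \<and> (\<forall>k\<in>UOp. f \<le> k \<and> g \<le> k \<longrightarrow> h \<le> k)"

definition U_is_inf :: "('a::vector_lattice \<Rightarrow> 'b::vector_lattice) \<Rightarrow> ('a \<Rightarrow> 'b) \<Rightarrow> ('a \<Rightarrow> 'b) \<Rightarrow> bool" where
  "U_is_inf f g h \<longleftrightarrow> h \<in> UOp \<and> h \<le> f \<and> h \<le> g \<and> (\<forall>k\<in>UOp. k \<le> f \<and> k \<le> g \<longrightarrow> k \<le> h)"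

definition U_disj :: "('a::vector_lattice \<Rightarrow> 'b::vector_lattice) \<Rightarrow> ('a \<Rightarrow> 'b) \<Rightarrow> bool" where
  "U_disj R S \<longleftrightarrow> (\<exists>a b. U_is_sup R (\<lambda>z. - R z) a \<and> U_is_sup S (\<lambda>z. - S z) b \<and> U_is_inf a b (\<lambda>_. 0))"

definition U_perp :: "('a::vector_lattice \<Rightarrow> 'b::vector_lattice) \<Rightarrow> ('a \<Rightarrow> 'b) set" where
  "U_perp S = {R \<in> UOp. U_disj R S}"

definition U_perpperp :: "('a::vector_lattice \<Rightarrow> 'b::vector_lattice) \<Rightarrow> ('a \<Rightarrow> 'b) set" where
  "U_perpperp S = {R \<in> UOp. \<forall>Q\<in>U_perp S. U_disj R Q}"

definition pi_S :: "('a::vector_lattice \<Rightarrow> 'b::vector_lattice) \<Rightarrow> ('a \<Rightarrow> 'b) \<Rightarrow> ('a \<Rightarrow> 'b)" where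
  "pi_S S T = (THE P. P \<in> U_perpperp S \<and> (\<lambda>z. T z - P z) \<in> U_perp S)"

definition pi_S_perp :: "('a::vector_lattice \<Rightarrow> 'b::vector_lattice) \<Rightarrow> ('a \<Rightarrow> 'b) \<Rightarrow> ('a \<Rightarrow> 'b)" where
  "pi_S_perp S T = (THE P. P \<in> U_perp S \<and> (\<lambda>z. T z - P z) \<in> U_perpperp S)"

definition vdcomp :: "'a::vector_lattice set \<Rightarrow> 'a set" where
  "vdcomp B = {x. \<forall>b\<in>B. vdisj x b}"

definition is_band :: "'a::vector_lattice set \<Rightarrow> bool" where
  "is_band B \<longleftrightarrow> 0 \<in> B \<and> (\<forall>x\<in>B. \<forall>y\<in>B. x + y \<in> B) \<and> (\<forall>c. \<forall>x\<in>B. c *\<^sub>R x \<in> B)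
     \<and> (\<forall>x\<in>B. \<forall>y. vabs y \<le> vabs x \<longrightarrow> y \<in> B)
     \<and> (\<forall>A x. A \<subseteq> B \<longrightarrow> (\<forall>a\<in>A. a \<le> x) \<longrightarrow> (\<forall>z. (\<forall>a\<in>A. a \<le> z) \<longrightarrow> x \<le> z) \<longrightarrow> x \<in> B)"

definition is_projection_band :: "'a::vector_lattice set \<Rightarrow> bool" where
  "is_projection_band B \<longleftrightarrow> is_band B \<and> (\<forall>x. \<exists>b\<in>B. \<exists>c\<in>vdcomp B. x = b + c)"

definition band_projections :: "('a::vector_lattice \<Rightarrow> 'a) set" where
  "band_projections = {\<rho>. \<exists>B. is_projection_band B \<and> (\<forall>x. \<rho> x \<in> B \<and> x - \<rho> x \<in> vdcomp B)}"

end

theory Submission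
  imports Defs "HOL-Library.Lattice_Algebras"
begin
instance vector_lattice \<subseteq> lattice_ab_group_add ..

definition labs :: "'a::lattice_ab_group_add \<Rightarrow> 'a" where "labs x = sup x (-x)"
definition ldisj :: "'a::lattice_ab_group_add \<Rightarrow> 'a \<Rightarrow> bool" where
  "ldisj x y \<longleftrightarrow> inf (labs x) (labs y) = 0"

lemma vabs_labs: "vabs x = labs x" by (simp add: vabs_def labs_def)
lemma vdisj_ldisj: "vdisj x y = ldisj x y" by (simp add: vdisj_def ldisj_def vabs_labs)



lemma labs_ge: "(x::'a::lattice_ab_group_add) \<le> labs x" by (simp add: labs_def)
lemma labs_ge_neg: "-(x::'a::lattice_ab_group_add) \<le> labs x" by (simp add: labs_def)
lemma labs_nonneg: "0 \<le> labs (x::'a::lattice_ab_group_add)"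
proof -
  have "x + (-x) \<le> labs x + labs x" by (intro add_mono labs_ge labs_ge_neg)
  thus ?thesis by simp
qed
lemma labs_least: "(x::'a::lattice_ab_group_add) \<le> c \<Longrightarrow> -x \<le> c \<Longrightarrow> labs x \<le> c"
  by (simp add: labs_def)
lemma labs_pos: "0 \<le> (x::'a::lattice_ab_group_add) \<Longrightarrow> labs x = x"
  unfolding labs_def by (rule sup_absorb1) (meson dual_order.trans neg_le_0_iff_le)
lemma labs_minus: "labs (-(x::'a::lattice_ab_group_add)) = labs x"
  by (simp add: labs_def sup_commute)
lemma labs_0_iff: "labs (x::'a::lattice_ab_group_add) = 0 \<longleftrightarrow> x = 0"
  by (simp add: labs_def)
lemma labs_0[simp]: "labs (0::'a::lattice_ab_group_add) = 0"
  by (simp add: labs_def)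
lemma labs_add: "labs ((a::'a::lattice_ab_group_add) + b) \<le> labs a + labs b"
proof (rule labs_least)
  show "a + b \<le> labs a + labs b" by (intro add_mono labs_ge)
  have "-a + -b \<le> labs a + labs b" by (intro add_mono labs_ge_neg)
  thus "-(a+b) \<le> labs a + labs b" by (simp add: add.commute)
qed
lemma labs_diff: "labs ((a::'a::lattice_ab_group_add) - b) \<le> labs a + labs b"
  using labs_add[of a "-b"] by (simp add: labs_minus)

lemma inf_add_pos_le: "0 \<le> (d::'a::lattice_ab_group_add) \<Longrightarrow> inf a (c + d) \<le> inf a c + d"
proof -
  assume d: "0 \<le> d"
  have "inf a (c + d) \<le> inf (a + d) (c + d)" using d
    by (meson add_increasing2 inf_mono order_refl)
  also have "\<dots> = inf a c + d" by (simp add: add_inf_distrib_right)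
  finally show ?thesis .
qed

lemma inf_add_le:
  fixes a b c :: "'a::lattice_ab_group_add"
  assumes "0 \<le> a" "0 \<le> b" "0 \<le> c"
  shows "inf a (b + c) \<le> inf a b + inf a c"
proof -
  have "inf a b + inf a c = inf (a + inf a c) (b + inf a c)" by (simp add: add_inf_distrib_right)
  moreover have "inf a (b + c) \<le> a + inf a c"
    using assms by (meson add_increasing2 inf_le1 le_infI order.trans)
  moreover have "b + inf a c = inf (b + a) (b + c)" by (simp add: add_inf_distrib_left)
  moreover have "inf a (b + c) \<le> inf (b + a) (b + c)"
    using assms by (simp add: le_infI1 add_increasing)
  ultimately show ?thesis by simp
qed

lemma disj_add_sup: "inf (a::'a::lattice_ab_group_add) b = 0 \<Longrightarrow> a + b = sup a b"
  using add_eq_inf_sup[of a b] by simp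

lemma disj_le_sum:
  fixes a b c :: "'a::lattice_ab_group_add"
  assumes "0 \<le> a" "0 \<le> b" "0 \<le> c" "inf a c = 0" "a \<le> b + c"
  shows "a \<le> b"
proof -
  have "a = inf a (b + c)" using assms by (simp add: inf_absorb1)
  also have "\<dots> \<le> inf a b + inf a c" by (rule inf_add_le) (use assms in auto)
  also have "\<dots> = inf a b" using assms by simp
  finally show ?thesis by simp
qed



lemma le_inf_zero: "0 \<le> (a::'a::lattice_ab_group_add) \<Longrightarrow> 0 \<le> b \<Longrightarrow> inf a b \<le> 0 \<Longrightarrow> inf a b = 0"
  by (simp add: order_antisym)

lemma inf_sum_zero:
  fixes a b c :: "'a::lattice_ab_group_add"
  assumes "0 \<le> a" "0 \<le> b" "0 \<le> c" "inf a c = 0" "inf b c = 0"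
  shows "inf (a + b) c = 0"
proof -
  have "inf c (a + b) \<le> inf c a + inf c b" using assms by (intro inf_add_le) auto
  also have "\<dots> = 0" using assms by (simp add: inf_commute)
  finally show ?thesis using assms by (intro le_inf_zero) (auto simp: inf_commute)
qed

lemma ldisj_sym: "ldisj x y \<longleftrightarrow> ldisj y x" by (simp add: ldisj_def inf_commute)

lemma ldisj_mono:
  fixes a b a' b' :: "'a::lattice_ab_group_add"
  assumes "ldisj a b" "labs a' \<le> labs a" "labs b' \<le> labs b"
  shows "ldisj a' b'"
proof -
  have "inf (labs a') (labs b') \<le> inf (labs a) (labs b)" using assms by (intro inf_mono)
  thus ?thesis using assms unfolding ldisj_def by (intro le_inf_zero labs_nonneg) auto
qed

lemma ldisj_add:
  fixes a b c :: "'a::lattice_ab_group_add"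
  assumes "ldisj a c" "ldisj b c"
  shows "ldisj (a + b) c"
proof -
  have "inf (labs a + labs b) (labs c) = 0" using assms unfolding ldisj_def
    by (intro inf_sum_zero labs_nonneg) auto
  hence "ldisj (labs a + labs b) c" unfolding ldisj_def
    by (simp add: labs_pos add_nonneg_nonneg labs_nonneg)
  thus ?thesis by (rule ldisj_mono) (simp_all add: labs_add labs_pos add_nonneg_nonneg labs_nonneg)
qed

lemma ldisj_minus: "ldisj (-a) c \<longleftrightarrow> ldisj (a::'a::lattice_ab_group_add) c"
  by (simp add: ldisj_def labs_minus)

lemma ldisj_diff:
  fixes a b c :: "'a::lattice_ab_group_add"
  assumes "ldisj a c" "ldisj b c"
  shows "ldisj (a - b) c"
  using ldisj_add[of a c "-b"] assms by (simp add: ldisj_minus)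

lemma ldisj_0: "ldisj 0 (y::'a::lattice_ab_group_add)"
  by (simp add: ldisj_def labs_nonneg inf_absorb1)

lemma ldisj_self: "ldisj x x \<Longrightarrow> (x::'a::lattice_ab_group_add) = 0"
  by (simp add: ldisj_def labs_0_iff)

lemma ldisj_pos: "0 \<le> a \<Longrightarrow> 0 \<le> b \<Longrightarrow> ldisj a b \<longleftrightarrow> inf a (b::'a::lattice_ab_group_add) = 0"
  by (simp add: ldisj_def labs_pos)

lemma pprt_le_labs: "pprt x \<le> labs (x::'a::lattice_ab_group_add)"
  by (simp add: pprt_def labs_def le_supI1 labs_nonneg[unfolded labs_def])
lemma pprt_neg_le_labs: "pprt (-x) \<le> labs (x::'a::lattice_ab_group_add)"
  using pprt_le_labs[of "-x"] by (simp add: labs_minus)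
lemma pprt_split: "x = pprt x - pprt (-(x::'a::lattice_ab_group_add))"
  by (metis diff_minus_eq_add pprt_neg prts)

definition lfrag :: "'a::lattice_ab_group_add \<Rightarrow> 'a set" where
  "lfrag x = {z. ldisj z (x - z)}"

lemma fragments_lfrag: "fragments x = lfrag x"
  by (simp add: fragments_def lfrag_def vdisj_ldisj)

lemma lfrag_0: "0 \<in> lfrag x" by (simp add: lfrag_def ldisj_0)
lemma lfrag_self: "x \<in> lfrag x" by (simp add: lfrag_def ldisj_sym ldisj_0)
lemma lfrag_compl: "y \<in> lfrag x \<Longrightarrow> x - y \<in> lfrag x"
  by (simp add: lfrag_def ldisj_sym)
lemma lfrag_neg: "y \<in> lfrag x \<Longrightarrow> -y \<in> lfrag (-x)"
proof -
  assume "y \<in> lfrag x"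
  moreover have "-x - -y = -(x - y)" by simp
  ultimately show ?thesis unfolding lfrag_def ldisj_def by (simp only: mem_Collect_eq labs_minus)
qed

lemma lfrag_le:
  fixes x y :: "'a::lattice_ab_group_add"
  assumes "y \<in> lfrag x" shows "y \<le> labs x"
proof -
  define w where "w = x - y"
  have d: "inf (labs y) (labs w) = 0" using assms by (simp add: lfrag_def ldisj_def w_def)
  have "y \<le> pprt x + pprt (-w)"
  proof -
    have "y = x + (-w)" by (simp add: w_def)
    also have "\<dots> \<le> pprt x + pprt (-w)" by (intro add_mono) (simp_all add: pprt_def)
    finally show ?thesis .
  qed
  hence "pprt y \<le> pprt x + pprt (-w)" by (simp add: pprt_def add_nonneg_nonneg)
  moreover have "inf (pprt y) (pprt (-w)) = 0"
  proof (rule le_inf_zero)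
    show "inf (pprt y) (pprt (-w)) \<le> 0" using d inf_mono[OF pprt_le_labs[of y] pprt_neg_le_labs[of w]] by simp
  qed simp_all
  ultimately have "pprt y \<le> pprt x" by (intro disj_le_sum[OF zero_le_pprt zero_le_pprt zero_le_pprt])
  hence "pprt y \<le> labs x" using pprt_le_labs order.trans by blast
  thus ?thesis by (simp add: pprt_def)
qed

lemma lfrag_labs:
  fixes x y :: "'a::lattice_ab_group_add"
  assumes "y \<in> lfrag x" shows "labs y \<le> labs x"
proof (rule labs_least)
  show "y \<le> labs x" using assms by (rule lfrag_le)
  show "-y \<le> labs x" using lfrag_le[OF lfrag_neg[OF assms]] by (simp add: labs_minus)
qed

lemma riesz_disj:
  fixes a e f :: "'a::lattice_ab_group_add"
  assumes "0 \<le> a" "0 \<le> e" "0 \<le> f" "inf e f = 0" "a \<le> e + f"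
  shows "a = inf a e + inf a f"
proof (rule order_antisym)
  have "a = inf a (e + f)" using assms by (simp add: inf_absorb1)
  also have "\<dots> \<le> inf a e + inf a f" using assms by (intro inf_add_le)
  finally show "a \<le> inf a e + inf a f" .
  have "inf (inf a e) (inf a f) = 0"
  proof (rule le_inf_zero)
    show "inf (inf a e) (inf a f) \<le> 0" using assms(4) by (metis inf_le2 inf_mono)
  qed (use assms in simp_all)
  hence "inf a e + inf a f = sup (inf a e) (inf a f)" by (rule disj_add_sup)
  also have "\<dots> \<le> a" by simp
  finally show "inf a e + inf a f \<le> a" .
qed

lemma lfrag_add:
  fixes x z y1 y2 :: "'a::lattice_ab_group_add"
  assumes "ldisj x z" "y1 \<in> lfrag x" "y2 \<in> lfrag z"
  shows "y1 + y2 \<in> lfrag (x + z)" "ldisj y1 y2" "ldisj (x - y1) (z - y2)"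
proof -
  have f1: "labs y1 \<le> labs x" "labs y2 \<le> labs z" "labs (x-y1) \<le> labs x" "labs (z-y2) \<le> labs z"
    using assms by (auto intro: lfrag_labs lfrag_compl)
  show d12: "ldisj y1 y2" by (rule ldisj_mono[OF assms(1) f1(1) f1(2)])
  show "ldisj (x - y1) (z - y2)" by (rule ldisj_mono[OF assms(1) f1(3) f1(4)])
  have a: "ldisj y1 (x - y1)" "ldisj y2 (z - y2)" using assms by (simp_all add: lfrag_def)
  have b: "ldisj y1 (z - y2)" "ldisj y2 (x - y1)"
    using ldisj_mono[OF assms(1) f1(1) f1(4)] ldisj_mono[OF assms(1) f1(3) f1(2)]
    by (simp_all add: ldisj_sym)
  have c1: "ldisj (x - y1) y1" "ldisj (x - y1) y2" "ldisj (z - y2) y1" "ldisj (z - y2) y2"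
    using a b by (simp_all add: ldisj_sym)
  have "ldisj ((x - y1) + (z - y2)) y1" "ldisj ((x - y1) + (z - y2)) y2"
    using c1 by (simp_all add: ldisj_add)
  hence "ldisj y1 ((x - y1) + (z - y2))" "ldisj y2 ((x - y1) + (z - y2))"
    by (simp_all add: ldisj_sym)
  hence "ldisj (y1 + y2) ((x - y1) + (z - y2))" by (rule ldisj_add)
  thus "y1 + y2 \<in> lfrag (x + z)" unfolding lfrag_def by (simp only: mem_Collect_eq add_diff_add)
qed



lemma frag_piece:
  fixes x z y :: "'a::lattice_ab_group_add"
  assumes xz: "ldisj x z" and yf: "y \<in> lfrag (x + z)"
  shows "inf (pprt y) (labs x) - inf (pprt (-y)) (labs x) \<in> lfrag x"
    and "y = (inf (pprt y) (labs x) - inf (pprt (-y)) (labs x)) + (inf (pprt y) (labs z) - inf (pprt (-y)) (labs z))"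
proof -
  define p where "p = pprt y"
  define n where "n = pprt (-y)"
  define e where "e = labs x"
  define f where "f = labs z"
  define w where "w = x + z - y"
  have d: "ldisj y w" using yf by (simp add: lfrag_def w_def)
  have ef: "inf e f = 0" using xz by (simp add: ldisj_def e_def f_def)
  have e0: "0 \<le> e" "0 \<le> f" by (simp_all add: e_def f_def labs_nonneg)
  have p0: "0 \<le> p" "0 \<le> n" by (simp_all add: p_def n_def)
  have ylab: "labs y \<le> e + f"
    using lfrag_labs[OF yf] labs_add[of x z] unfolding e_def f_def by (rule order.trans)
  have pl: "p \<le> e + f" "n \<le> e + f"
    using ylab pprt_le_labs[of y] pprt_neg_le_labs[of y] unfolding p_def n_def by (auto intro: order.trans)
  have yp: "y = p - n" unfolding p_def n_def by (rule pprt_split)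
  have pr: "p = inf p e + inf p f" by (rule riesz_disj) (use p0 e0 ef pl in auto)
  have nr: "n = inf n e + inf n f" by (rule riesz_disj) (use p0 e0 ef pl in auto)
  define y1 where "y1 = inf p e - inf n e"
  define y2 where "y2 = inf p f - inf n f"
  have ysum: "y = y1 + y2"
  proof -
    have "y = (inf p e + inf p f) - (inf n e + inf n f)" using yp pr nr by simp
    thus ?thesis unfolding y1_def y2_def by (simp add: add_diff_add)
  qed
  thus "y = (inf (pprt y) (labs x) - inf (pprt (-y)) (labs x)) + (inf (pprt y) (labs z) - inf (pprt (-y)) (labs z))"
    by (simp add: y1_def y2_def p_def n_def e_def f_def)
  define K where "K = inf p e + inf n e"
  define L where "L = inf p f + inf n f"
  have K0: "0 \<le> K" "0 \<le> L" using p0 e0 by (simp_all add: K_def L_def)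
  have i0: "0 \<le> inf p e" "0 \<le> inf n e" "0 \<le> inf p f" "0 \<le> inf n f" using p0 e0 by simp_all
  have y1K: "labs y1 \<le> K"
    using labs_diff[of "inf p e" "inf n e"] i0 by (simp add: y1_def y2_def K_def L_def labs_pos)
  have y2L: "labs y2 \<le> L"
    using labs_diff[of "inf p f" "inf n f"] i0 by (simp add: y1_def y2_def K_def L_def labs_pos)
  have xy1: "x - y1 = (w + (-z)) + y2" using ysum by (simp add: w_def algebra_simps)
  have lxy1: "labs (x - y1) \<le> labs w + f + L"
  proof -
    have "labs (x - y1) \<le> labs (w + (-z)) + labs y2" unfolding xy1 by (rule labs_add)
    also have "\<dots> \<le> (labs w + labs (-z)) + L" by (intro add_mono labs_add y2L)
    finally show ?thesis by (simp add: labs_minus f_def)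
  qed
  have dyw: "ldisj (inf p e) w" "ldisj (inf n e) w"
    using ldisj_mono[OF d, of "inf p e" w] ldisj_mono[OF d, of "inf n e" w]
      pprt_le_labs[of y] pprt_neg_le_labs[of y] i0
    by (auto simp: labs_pos p_def n_def intro: order.trans[OF inf_le1])
  have dKw: "ldisj K (labs w)"
    unfolding K_def L_def using dyw ldisj_add
    by (metis ldisj_def labs_nonneg labs_pos)
  have dxz: "ldisj (inf p e) f" "ldisj (inf n e) f"
    using ldisj_mono[OF xz, of "inf p e" f] ldisj_mono[OF xz, of "inf n e" f] i0 e0
    by (auto simp: labs_pos e_def f_def)
  have dKf: "ldisj K f" unfolding K_def L_def using dxz by (rule ldisj_add)
  have dKL: "ldisj K L"
  proof -
    have "ldisj K (inf p f)" "ldisj K (inf n f)"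
      using ldisj_mono[OF dKf, of K "inf p f"] ldisj_mono[OF dKf, of K "inf n f"] i0 e0
      by (auto simp: labs_pos)
    thus ?thesis unfolding L_def using ldisj_sym ldisj_add by metis
  qed
  have "ldisj K (labs w + f + L)"
    using dKw dKf dKL ldisj_sym ldisj_add by metis
  hence "ldisj y1 (x - y1)"
    by (rule ldisj_mono) (use y1K lxy1 K0 e0 labs_nonneg[of w] in \<open>auto simp: labs_pos add_nonneg_nonneg\<close>)
  thus "inf (pprt y) (labs x) - inf (pprt (-y)) (labs x) \<in> lfrag x"
    by (simp add: lfrag_def y1_def y2_def p_def n_def e_def)
qed

lemma frag_split:
  fixes x z y :: "'a::lattice_ab_group_add"
  assumes xz: "ldisj x z" and yf: "y \<in> lfrag (x + z)"
  shows "\<exists>y1 y2. y1 \<in> lfrag x \<and> y2 \<in> lfrag z \<and> y = y1 + y2"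
proof -
  have zx: "ldisj z x" using xz by (simp add: ldisj_sym)
  have yf': "y \<in> lfrag (z + x)" using yf by (simp add: add.commute)
  show ?thesis using frag_piece(1)[OF xz yf] frag_piece(1)[OF zx yf'] frag_piece(2)[OF xz yf] by blast
qed



lemma scale_sup:
  fixes a b :: "'a::vector_lattice"
  assumes c: "0 \<le> c"
  shows "c *\<^sub>R sup a b = sup (c *\<^sub>R a) (c *\<^sub>R b)"
proof (rule order_antisym)
  show "sup (c *\<^sub>R a) (c *\<^sub>R b) \<le> c *\<^sub>R sup a b"
    using c by (simp add: scaleR_left_mono)
  show "c *\<^sub>R sup a b \<le> sup (c *\<^sub>R a) (c *\<^sub>R b)"
  proof (cases "c = 0")
    case True thus ?thesis by simp
  next
    case False
    hence cp: "0 < c" using c by simp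
    have "a = inverse c *\<^sub>R (c *\<^sub>R a)" "b = inverse c *\<^sub>R (c *\<^sub>R b)" using cp by simp_all
    hence "a \<le> inverse c *\<^sub>R sup (c *\<^sub>R a) (c *\<^sub>R b)" "b \<le> inverse c *\<^sub>R sup (c *\<^sub>R a) (c *\<^sub>R b)"
      using cp by (metis inf_sup_ord(3,4) inverse_nonnegative_iff_nonnegative less_imp_le scaleR_left_mono)+
    hence "sup a b \<le> inverse c *\<^sub>R sup (c *\<^sub>R a) (c *\<^sub>R b)" by simp
    hence "c *\<^sub>R sup a b \<le> c *\<^sub>R (inverse c *\<^sub>R sup (c *\<^sub>R a) (c *\<^sub>R b))" using c by (rule scaleR_left_mono)
    thus ?thesis using cp by simp
  qed
qed

lemma scale_inf:
  fixes a b :: "'a::vector_lattice"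
  assumes c: "0 \<le> c"
  shows "c *\<^sub>R inf a b = inf (c *\<^sub>R a) (c *\<^sub>R b)"
proof -
  have "c *\<^sub>R inf a b = c *\<^sub>R (- sup (-a) (-b))" by (subst inf_eq_neg_sup) (rule refl)
  also have "\<dots> = - (c *\<^sub>R sup (-a) (-b))" by (rule scaleR_minus_right)
  also have "\<dots> = - sup (c *\<^sub>R (-a)) (c *\<^sub>R (-b))" by (subst scale_sup[OF c]) (rule refl)
  also have "\<dots> = - sup (-(c *\<^sub>R a)) (-(c *\<^sub>R b))" by (simp only: scaleR_minus_right)
  also have "\<dots> = inf (c *\<^sub>R a) (c *\<^sub>R b)" by (rule inf_eq_neg_sup[symmetric])
  finally show ?thesis .
qed

lemma labs_scale: "labs (c *\<^sub>R (x::'a::vector_lattice)) = \<bar>c\<bar> *\<^sub>R labs x"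
proof (cases "0 \<le> c")
  case True thus ?thesis using scale_sup[OF True, of x "-x"] by (simp add: labs_def)
next
  case False
  hence "c *\<^sub>R x = (-c) *\<^sub>R (-x)" "0 \<le> -c" by simp_all
  thus ?thesis using scale_sup[of "-c" "-x" "x"] False by (simp add: labs_def sup_commute)
qed

lemma inf_scale_zero:
  fixes a b :: "'a::vector_lattice"
  assumes "0 \<le> a" "0 \<le> b" "inf a b = 0" "0 \<le> t"
  shows "inf (t *\<^sub>R a) b = 0"
proof (rule le_inf_zero)
  define M where "M = max t 1"
  have "inf (t *\<^sub>R a) b \<le> inf (M *\<^sub>R a) (M *\<^sub>R b)"
  proof (rule inf_mono)
    show "t *\<^sub>R a \<le> M *\<^sub>R a" using assms by (intro scaleR_right_mono) (auto simp: M_def)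
    have "1 *\<^sub>R b \<le> M *\<^sub>R b" using assms by (intro scaleR_right_mono) (auto simp: M_def)
    thus "b \<le> M *\<^sub>R b" by simp
  qed
  also have "\<dots> = M *\<^sub>R inf a b" by (rule scale_inf[symmetric]) (simp add: M_def)
  finally show "inf (t *\<^sub>R a) b \<le> 0" using assms by simp
qed (use assms in \<open>auto intro: scaleR_nonneg_nonneg\<close>)

lemma ldisj_scale:
  fixes x y :: "'a::vector_lattice"
  assumes "ldisj x y" shows "ldisj (c *\<^sub>R x) y"
  using assms unfolding ldisj_def labs_scale by (intro inf_scale_zero labs_nonneg) auto

definition ldcomp :: "'a::lattice_ab_group_add set \<Rightarrow> 'a set" where
  "ldcomp B = {x. \<forall>b\<in>B. ldisj x b}"

lemma vdcomp_ldcomp: "vdcomp B = ldcomp B"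
  by (simp add: vdcomp_def ldcomp_def vdisj_ldisj)

lemma ldcomp_0: "0 \<in> ldcomp B" by (simp add: ldcomp_def ldisj_0)
lemma ldcomp_add: "x \<in> ldcomp B \<Longrightarrow> y \<in> ldcomp B \<Longrightarrow> x + y \<in> ldcomp B"
  by (simp add: ldcomp_def ldisj_add)
lemma ldcomp_diff: "x \<in> ldcomp B \<Longrightarrow> y \<in> ldcomp B \<Longrightarrow> x - y \<in> ldcomp B"
  by (simp add: ldcomp_def ldisj_diff)
lemma ldcomp_scale: "x \<in> ldcomp B \<Longrightarrow> c *\<^sub>R (x::'a::vector_lattice) \<in> ldcomp B"
  by (simp add: ldcomp_def ldisj_scale)
lemma ldcomp_solid: "x \<in> ldcomp B \<Longrightarrow> labs y \<le> labs x \<Longrightarrow> y \<in> ldcomp B"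
  unfolding ldcomp_def by (auto intro: ldisj_mono)

lemma least_is_0:
  fixes x :: "'a::lattice_ab_group_add"
  assumes "\<forall>z. x \<le> z" shows "x = 0"
proof -
  have "x \<le> 0" "x \<le> x + x" using assms by blast+
  hence "x \<le> 0" "0 \<le> x" by (simp_all only: le_add_same_cancel1)
  thus ?thesis by (rule order_antisym)
qed

lemma ldcomp_closed:
  fixes A :: "'a::lattice_ab_group_add set"
  assumes AB: "A \<subseteq> ldcomp D" and ub: "\<forall>a\<in>A. a \<le> x" and least: "\<forall>z. (\<forall>a\<in>A. a \<le> z) \<longrightarrow> x \<le> z"
  shows "x \<in> ldcomp D"
proof (cases "A = {}")
  case True thus ?thesis using least least_is_0[of x] ldcomp_0 by auto
next
  case False
  then obtain a0 where a0: "a0 \<in> A" by auto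
  define q where "q = x - a0"
  have q0: "0 \<le> q" using ub a0 by (simp add: q_def)
  have "q \<in> ldcomp D"
    unfolding ldcomp_def mem_Collect_eq
  proof (rule ballI)
    fix d assume dD: "d \<in> D"
    define e where "e = labs d"
    define m where "m = inf q e"
    have m0: "0 \<le> m" by (simp add: m_def q0 e_def labs_nonneg)
    have "\<forall>a\<in>A. a \<le> x - m"
    proof
      fix a assume aA: "a \<in> A"
      define p where "p = pprt (a - a0)"
      have "a - a0 \<in> ldcomp D" using AB aA a0 by (auto intro: ldcomp_diff)
      hence "ldisj (a - a0) d" using dD by (simp add: ldcomp_def)
      hence pe: "inf p e = 0" unfolding p_def e_def
        by (metis ldisj_def ldisj_mono labs_pos pprt_le_labs zero_le_pprt order_refl)
      have pq: "p \<le> q" using ub aA q0 by (simp add: p_def pprt_def q_def)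
      have "inf p m = 0" using pe m0 unfolding m_def
        by (metis inf.coboundedI2 inf_le2 inf_mono le_inf_zero order_refl zero_le_pprt p_def inf_absorb2 antisym)
      hence "p + m = sup p m" by (rule disj_add_sup)
      also have "\<dots> \<le> q" using pq by (simp add: m_def)
      finally have h1: "p \<le> q - m" by (simp add: le_diff_eq)
      have h2: "a - a0 \<le> p" by (simp add: p_def pprt_def)
      have h3: "q - m = (x - m) - a0" by (simp add: q_def algebra_simps)
      have "a - a0 \<le> (x - m) - a0" using order.trans[OF h2 h1] h3 by simp
      hence "(a - a0) + a0 \<le> ((x - m) - a0) + a0" by (rule add_right_mono)
      thus "a \<le> x - m" by simp
    qed
    hence "x \<le> x - m" using least by blast
    hence "m = 0" using m0 by simp
    thus "ldisj q d" using q0 by (simp add: ldisj_def labs_pos m_def e_def)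
  qed
  moreover have "a0 \<in> ldcomp D" using AB a0 by auto
  ultimately have "q + a0 \<in> ldcomp D" by (rule ldcomp_add)
  thus ?thesis by (simp add: q_def)
qed

lemma is_band_vdcomp: "is_band (vdcomp (D::'a::vector_lattice set))"
  unfolding is_band_def vdcomp_ldcomp
proof (intro conjI ballI allI impI)
  show "0 \<in> ldcomp D" by (rule ldcomp_0)
  fix x y assume "x \<in> ldcomp D" "y \<in> ldcomp D"
  thus "x + y \<in> ldcomp D" by (rule ldcomp_add)
next
  fix c x assume "x \<in> ldcomp D"
  thus "c *\<^sub>R x \<in> ldcomp D" by (rule ldcomp_scale)
next
  fix x y assume "x \<in> ldcomp D" "vabs y \<le> vabs x"
  thus "y \<in> ldcomp D" by (simp add: ldcomp_solid vabs_labs)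
next
  fix A x assume "A \<subseteq> ldcomp D" "\<forall>a\<in>A. a \<le> x" "\<forall>z. (\<forall>a\<in>A. a \<le> z) \<longrightarrow> x \<le> z"
  thus "x \<in> ldcomp D" by (rule ldcomp_closed)
qed



lemma band_sub:
  assumes "is_band B"
  shows "0 \<in> B" "x \<in> B \<Longrightarrow> y \<in> B \<Longrightarrow> x + y \<in> B" "x \<in> B \<Longrightarrow> c *\<^sub>R x \<in> B"
    "x \<in> B \<Longrightarrow> y \<in> B \<Longrightarrow> x - y \<in> B"
proof -
  note a = assms[unfolded is_band_def]
  have h0: "0 \<in> B" using a by (rule conjunct1)
  have h1: "\<forall>x\<in>B. \<forall>y\<in>B. x + y \<in> B" using a[THEN conjunct2] by (rule conjunct1)
  have h2: "\<forall>c. \<forall>x\<in>B. c *\<^sub>R x \<in> B" using a[THEN conjunct2, THEN conjunct2] by (rule conjunct1)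
  show "0 \<in> B" by (rule h0)
  show "x \<in> B \<Longrightarrow> y \<in> B \<Longrightarrow> x + y \<in> B" using h1 by blast
  show "x \<in> B \<Longrightarrow> c *\<^sub>R x \<in> B" using h2 by blast
  assume "x \<in> B" "y \<in> B"
  hence "x + (-1) *\<^sub>R y \<in> B" using h1 h2 by blast
  thus "x - y \<in> B" by simp
qed

lemma band_unique:
  fixes \<rho> :: "'a::vector_lattice \<Rightarrow> 'a"
  assumes B: "is_band B" and r: "\<forall>x. \<rho> x \<in> B \<and> x - \<rho> x \<in> ldcomp B"
    and b: "b \<in> B" and c: "c \<in> ldcomp B"
  shows "\<rho> (b + c) = b"
proof -
  define d where "d = \<rho> (b + c) - b"
  have "d \<in> B" unfolding d_def using r b band_sub[OF B] by blast
  moreover have "d = c - ((b + c) - \<rho> (b + c))" by (simp add: d_def algebra_simps)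
  hence "d \<in> ldcomp B" using r c ldcomp_diff by metis
  ultimately have "ldisj d d" by (simp add: ldcomp_def)
  hence "d = 0" by (rule ldisj_self)
  thus ?thesis by (simp add: d_def)
qed

lemma bp_obtain:
  assumes "\<rho> \<in> band_projections"
  obtains B where "is_band B" "\<forall>x. \<rho> x \<in> B \<and> x - \<rho> x \<in> ldcomp B"
  using assms by (auto simp: band_projections_def is_projection_band_def vdcomp_ldcomp)

lemma disj_sum_nonneg:
  fixes b c :: "'a::lattice_ab_group_add"
  assumes d: "ldisj b c" and s: "0 \<le> b + c" shows "0 \<le> b"
proof -
  have "0 + (-b) \<le> (b + c) + (-b)" by (rule add_right_mono[OF s])
  hence "-b \<le> c" by simp
  hence "pprt (-b) \<le> labs c" using labs_ge[of c] labs_nonneg[of c] by (simp add: pprt_def)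
  moreover have "pprt (-b) \<le> labs b" by (rule pprt_neg_le_labs)
  ultimately have "pprt (-b) \<le> inf (labs b) (labs c)" by simp
  hence "pprt (-b) \<le> 0" using d unfolding ldisj_def by metis
  thus ?thesis by (simp add: pprt_def)
qed

lemma bp_props:
  fixes \<rho> :: "'a::vector_lattice \<Rightarrow> 'a"
  assumes "\<rho> \<in> band_projections"
  shows bp_add: "\<rho> (x + y) = \<rho> x + \<rho> y"
    and bp_scale: "\<rho> (c *\<^sub>R x) = c *\<^sub>R \<rho> x"
    and bp_idem: "\<rho> (\<rho> x) = \<rho> x"
    and bp_compl: "\<rho> (x - \<rho> x) = 0"
    and bp_nonneg: "0 \<le> x \<Longrightarrow> 0 \<le> \<rho> x"
    and bp_le: "0 \<le> x \<Longrightarrow> \<rho> x \<le> x"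
proof -
  obtain B where B: "is_band B" and r: "\<forall>x. \<rho> x \<in> B \<and> x - \<rho> x \<in> ldcomp B"
    using assms by (rule bp_obtain)
  have "\<rho> (\<rho> x + \<rho> y + ((x - \<rho> x) + (y - \<rho> y))) = \<rho> x + \<rho> y"
    using r by (intro band_unique[OF B r] band_sub[OF B] ldcomp_add) auto
  thus "\<rho> (x + y) = \<rho> x + \<rho> y" by (simp add: algebra_simps)
  have "\<rho> (c *\<^sub>R \<rho> x + c *\<^sub>R (x - \<rho> x)) = c *\<^sub>R \<rho> x"
    using r by (intro band_unique[OF B r] band_sub[OF B] ldcomp_scale) auto
  thus "\<rho> (c *\<^sub>R x) = c *\<^sub>R \<rho> x" by (simp add: algebra_simps)
  have "\<rho> (\<rho> x + 0) = \<rho> x" using r by (intro band_unique[OF B r] ldcomp_0) auto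
  thus "\<rho> (\<rho> x) = \<rho> x" by simp
  have "\<rho> (0 + (x - \<rho> x)) = 0" using r by (intro band_unique[OF B r] band_sub[OF B]) auto
  thus "\<rho> (x - \<rho> x) = 0" by simp
  have d: "ldisj (\<rho> x) (x - \<rho> x)" using r by (simp add: ldcomp_def ldisj_sym)
  assume x: "0 \<le> x"
  show "0 \<le> \<rho> x" using disj_sum_nonneg[OF d] x by simp
  have "0 \<le> x - \<rho> x" using disj_sum_nonneg[OF d[unfolded ldisj_sym[of "\<rho> x"]]] x by simp
  thus "\<rho> x \<le> x" by simp
qed

lemma bp_diff: "\<rho> \<in> band_projections \<Longrightarrow> \<rho> (x - y) = \<rho> x - \<rho> y"
  using bp_add[of \<rho> "x - y" y] by (simp add: algebra_simps)

lemma bp_mono: "\<rho> \<in> band_projections \<Longrightarrow> x \<le> y \<Longrightarrow> \<rho> x \<le> \<rho> y"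
  using bp_nonneg[of \<rho> "y - x"] bp_diff[of \<rho> y x] by simp

lemma bp_id: "(\<lambda>x. x) \<in> band_projections"
proof -
  have b: "is_band (UNIV::'a set)" by (simp add: is_band_def)
  have c: "(0::'a) \<in> vdcomp UNIV" by (simp add: vdcomp_ldcomp ldcomp_0)
  show ?thesis unfolding band_projections_def is_projection_band_def
    using b c by (intro CollectI exI[of _ UNIV]) (auto intro!: bexI[of _ 0])
qed

definition Wp :: "'a::{vector_lattice, conditionally_complete_lattice} \<Rightarrow> 'a \<Rightarrow> 'a" where
  "Wp u v = Sup (range (\<lambda>n::nat. inf v (real n *\<^sub>R u)))"

lemma sup_trick:
  fixes s :: "nat \<Rightarrow> 'a::{lattice_ab_group_add, conditionally_complete_lattice}"
  assumes "bdd_above (range s)" "\<forall>n. c \<le> Sup (range s) - s n"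
  shows "c \<le> 0"
proof -
  have "\<forall>n. s n \<le> Sup (range s) - c" using assms(2) by (simp add: le_diff_eq add.commute)
  hence "Sup (range s) \<le> Sup (range s) - c" by (intro cSUP_least) auto
  thus ?thesis by (simp add: le_diff_eq)
qed

lemma Wp_props:
  fixes u v :: "'a::{vector_lattice, conditionally_complete_lattice}"
  assumes u: "0 \<le> u" and v: "0 \<le> v"
  shows "bdd_above (range (\<lambda>n::nat. inf v (real n *\<^sub>R u)))"
    and "inf v (real n *\<^sub>R u) \<le> Wp u v" and "Wp u v \<le> v" and "0 \<le> Wp u v"
proof -
  show bdd: "bdd_above (range (\<lambda>n::nat. inf v (real n *\<^sub>R u)))"
    by (rule bdd_aboveI[of _ v]) auto
  show "inf v (real n *\<^sub>R u) \<le> Wp u v" unfolding Wp_def by (rule cSUP_upper[OF UNIV_I bdd])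
  show "Wp u v \<le> v" unfolding Wp_def by (rule cSUP_least) auto
  have "inf v (real 0 *\<^sub>R u) \<le> Wp u v" unfolding Wp_def by (rule cSUP_upper[OF UNIV_I bdd])
  thus "0 \<le> Wp u v" using v by (simp add: inf_absorb2)
qed

lemma Wp_disj1:
  fixes u v :: "'a::{vector_lattice, conditionally_complete_lattice}"
  assumes u: "0 \<le> u" and v: "0 \<le> v"
  shows "ldisj (v - Wp u v) u"
proof -
  note W = Wp_props[OF u v]
  define c where "c = inf (v - Wp u v) u"
  have "\<forall>n. c \<le> Sup (range (\<lambda>n::nat. inf v (real n *\<^sub>R u))) - inf v (real n *\<^sub>R u)"
  proof
    fix n
    define m where "m = inf v (real n *\<^sub>R u)"
    have "c \<le> inf (v - m) u" unfolding c_def m_def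
      by (rule inf_mono[OF diff_left_mono[OF W(2)] order_refl])
    moreover have "inf (v - m) u + m = inf v (u + m)" by (simp add: add_inf_distrib_right)
    moreover have "inf v (u + m) \<le> inf v (real (Suc n) *\<^sub>R u)"
    proof -
      have "u + m \<le> u + real n *\<^sub>R u" by (simp add: m_def)
      also have "\<dots> = real (Suc n) *\<^sub>R u" by (simp add: algebra_simps)
      finally show ?thesis by (intro inf_mono) simp_all
    qed
    moreover have "inf v (real (Suc n) *\<^sub>R u) \<le> Wp u v" by (rule W(2))
    ultimately have "c + m \<le> Wp u v" by (metis add_right_mono order.trans)
    thus "c \<le> Sup (range (\<lambda>n::nat. inf v (real n *\<^sub>R u))) - inf v (real n *\<^sub>R u)"
      by (simp only: Wp_def m_def le_diff_eq)
  qed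
  hence "c \<le> 0" by (intro sup_trick[OF W(1)])
  moreover have "0 \<le> c" using W(3) u by (simp add: c_def)
  ultimately have "c = 0" by simp
  thus ?thesis using W(3) u by (simp add: ldisj_pos c_def)
qed

lemma Wp_disj2:
  fixes u v z :: "'a::{vector_lattice, conditionally_complete_lattice}"
  assumes u: "0 \<le> u" and v: "0 \<le> v" and z: "ldisj z u"
  shows "ldisj (Wp u v) z"
proof -
  note W = Wp_props[OF u v]
  define e where "e = labs z"
  have e0: "0 \<le> e" by (simp add: e_def labs_nonneg)
  have eu: "inf e u = 0" using z u by (simp add: ldisj_def labs_pos e_def)
  define c where "c = inf e (Wp u v)"
  have "\<forall>n. c \<le> Sup (range (\<lambda>n::nat. inf v (real n *\<^sub>R u))) - inf v (real n *\<^sub>R u)"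
  proof
    fix n
    define m where "m = inf v (real n *\<^sub>R u)"
    have "inf (real n *\<^sub>R u) e = 0" using inf_scale_zero[OF u e0, of "real n"] eu by (simp add: inf_commute)
    hence em: "inf e m \<le> 0" unfolding m_def by (metis inf_commute inf_le2 inf_mono order_refl)
    have "c = inf e (m + (Wp u v - m))" by (simp add: c_def)
    also have "\<dots> \<le> inf e m + (Wp u v - m)"
      by (rule inf_add_pos_le) (use W(2)[of n] in \<open>simp only: m_def diff_ge_0_iff_ge\<close>)
    also have "\<dots> \<le> Wp u v - m" using em by simp
    finally show "c \<le> Sup (range (\<lambda>n::nat. inf v (real n *\<^sub>R u))) - inf v (real n *\<^sub>R u)"
      by (simp add: Wp_def m_def)
  qed
  hence "c \<le> 0" by (intro sup_trick[OF W(1)])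
  moreover have "0 \<le> c" using W(4) e0 by (simp add: c_def)
  ultimately have "c = 0" by simp
  thus ?thesis using W(4) by (simp add: ldisj_def labs_pos c_def e_def inf_commute)
qed

lemma bp_exists:
  fixes u :: "'a::{vector_lattice, conditionally_complete_lattice}"
  assumes u: "0 \<le> u"
  shows "\<exists>\<rho>\<in>band_projections. \<rho> u = 0 \<and> (\<forall>z. ldisj z u \<longrightarrow> \<rho> z = z)"
proof -
  define B where "B = ldcomp {u}"
  define \<rho> where "\<rho> x = (pprt x - Wp u (pprt x)) - (pprt (-x) - Wp u (pprt (-x)))" for x
  have B: "is_band B" using is_band_vdcomp[of "{u}"] by (simp add: B_def vdcomp_ldcomp)
  have inB: "v - Wp u v \<in> B" if "0 \<le> v" for v
    using Wp_disj1[OF u that] by (simp add: B_def ldcomp_def)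
  have inBd: "Wp u v \<in> ldcomp B" if "0 \<le> v" for v
    using Wp_disj2[OF u that] by (auto simp: B_def ldcomp_def)
  have r: "\<forall>x. \<rho> x \<in> B \<and> x - \<rho> x \<in> ldcomp B"
  proof
    fix x
    have "\<rho> x \<in> B" unfolding \<rho>_def by (intro band_sub(4)[OF B] inB) simp_all
    moreover have "x - \<rho> x = Wp u (pprt x) - Wp u (pprt (-x))"
      using pprt_split[of x] by (simp add: \<rho>_def algebra_simps)
    hence "x - \<rho> x \<in> ldcomp B" by (simp add: ldcomp_diff inBd)
    ultimately show "\<rho> x \<in> B \<and> x - \<rho> x \<in> ldcomp B" by simp
  qed
  have bp: "\<rho> \<in> band_projections"
    unfolding band_projections_def is_projection_band_def vdcomp_ldcomp
    using B r by (intro CollectI exI[of _ B]) (metis diff_add_cancel add.commute)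
  have "u \<in> ldcomp B" by (auto simp: B_def ldcomp_def ldisj_sym)
  hence "\<rho> (0 + u) = 0" by (intro band_unique[OF B r] band_sub(1)[OF B])
  moreover have "\<rho> z = z" if "ldisj z u" for z
  proof -
    have "z \<in> B" using that by (simp add: B_def ldcomp_def)
    hence "\<rho> (z + 0) = z" by (intro band_unique[OF B r] ldcomp_0)
    thus ?thesis by simp
  qed
  ultimately show ?thesis using bp by auto
qed



lemma Inf_minkowski:
  fixes A B :: "'a::{lattice_ab_group_add, conditionally_complete_lattice} set"
  assumes "A \<noteq> {}" "B \<noteq> {}" "bdd_below A" "bdd_below B"
  shows "Inf {a + b | a b. a \<in> A \<and> b \<in> B} = Inf A + Inf B"
proof (rule order_antisym)
  let ?C = "{a + b | a b. a \<in> A \<and> b \<in> B}"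
  have ne: "?C \<noteq> {}" using assms by blast
  show "Inf A + Inf B \<le> Inf ?C"
    by (rule cInf_greatest[OF ne]) (auto intro!: add_mono cInf_lower assms)
  have "\<forall>b\<in>B. Inf ?C - b \<le> Inf A"
  proof
    fix b assume b: "b \<in> B"
    have "bdd_below ?C"
    proof -
      obtain m1 where "\<forall>a\<in>A. m1 \<le> a" using assms(3) by (auto simp: bdd_below_def)
      moreover obtain m2 where "\<forall>b\<in>B. m2 \<le> b" using assms(4) by (auto simp: bdd_below_def)
      ultimately show ?thesis by (intro bdd_belowI[of _ "m1 + m2"]) (auto intro: add_mono)
    qed
    hence "\<forall>a\<in>A. Inf ?C \<le> a + b" using b by (auto intro: cInf_lower)
    hence "\<forall>a\<in>A. Inf ?C - b \<le> a" by (simp add: diff_le_eq)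
    thus "Inf ?C - b \<le> Inf A" using assms(1) by (intro cInf_greatest) auto
  qed
  hence "\<forall>b\<in>B. Inf ?C - Inf A \<le> b" by (simp add: diff_le_eq add.commute le_diff_eq)
  hence "Inf ?C - Inf A \<le> Inf B" using assms(2) by (intro cInf_greatest) auto
  thus "Inf ?C \<le> Inf A + Inf B" by (simp add: diff_le_eq add.commute)
qed

lemma UOp_iff: "T \<in> UOp \<longleftrightarrow> (\<forall>x y. ldisj x y \<longrightarrow> T (x + y) = T x + T y) \<and> order_bounded_op T"
  by (simp add: UOp_def orth_additive_def vdisj_ldisj)

lemma U_add: "T \<in> UOp \<Longrightarrow> ldisj x y \<Longrightarrow> T (x + y) = T x + T y"
  by (simp add: UOp_iff)

lemma U_zero: "T \<in> UOp \<Longrightarrow> T 0 = 0"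
  using U_add[of T 0 0] ldisj_0[of 0] by simp

lemma U_frag: "T \<in> UOp \<Longrightarrow> y \<in> lfrag x \<Longrightarrow> T x = T y + T (x - y)"
  using U_add[of T y "x - y"] by (simp add: lfrag_def)

lemma U_bounded:
  assumes "T \<in> UOp" "order_bounded_set A"
  obtains m M where "\<forall>x\<in>A. m \<le> T x \<and> T x \<le> M"
proof -
  have "order_bounded_set (T ` A)" using assms by (simp add: UOp_def order_bounded_op_def)
  then obtain c d where "T ` A \<subseteq> {c..d}" by (auto simp: order_bounded_set_def)
  hence "\<forall>x\<in>A. c \<le> T x \<and> T x \<le> d" by auto
  thus ?thesis by (rule that)
qed

lemma labs_interval:
  fixes x a b :: "'a::lattice_ab_group_add"
  assumes "a \<le> x" "x \<le> b" shows "labs x \<le> labs a + labs b"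
proof (rule labs_least)
  have "x \<le> labs b" by (rule order.trans[OF assms(2) labs_ge])
  thus "x \<le> labs a + labs b" using labs_nonneg[of a] by (metis add_increasing)
  have "-x \<le> -a" using assms(1) by simp
  hence "-x \<le> labs a" using labs_ge_neg[of a] by (rule order.trans)
  thus "-x \<le> labs a + labs b" using labs_nonneg[of b] by (metis add_increasing2)
qed

lemma frag_interval:
  fixes x y c :: "'a::lattice_ab_group_add"
  assumes "y \<in> lfrag x" "labs x \<le> c" shows "-c \<le> y" "y \<le> c"
proof -
  have "labs y \<le> c" using lfrag_labs[OF assms(1)] assms(2) by (rule order.trans)
  hence "-y \<le> c" "y \<le> c" using labs_ge[of y] labs_ge_neg[of y] by (auto intro: order.trans)
  thus "-c \<le> y" "y \<le> c" by (simp_all add: minus_le_iff)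
qed

lemma U_in_add: "S \<in> UOp \<Longrightarrow> T \<in> UOp \<Longrightarrow> (\<lambda>x. S x + T x) \<in> UOp"
proof -
  assume S: "S \<in> UOp" and T: "T \<in> UOp"
  have "order_bounded_op (\<lambda>x. S x + T x)"
    unfolding order_bounded_op_def
  proof (intro allI impI)
    fix A :: "'a set" assume A: "order_bounded_set A"
    obtain m1 M1 where 1: "\<forall>x\<in>A. m1 \<le> S x \<and> S x \<le> M1" using U_bounded[OF S A] by blast
    obtain m2 M2 where 2: "\<forall>x\<in>A. m2 \<le> T x \<and> T x \<le> M2" using U_bounded[OF T A] by blast
    have "\<forall>x\<in>A. m1 + m2 \<le> S x + T x \<and> S x + T x \<le> M1 + M2" using 1 2 by (metis add_mono)
    hence "(\<lambda>x. S x + T x) ` A \<subseteq> {m1 + m2..M1 + M2}" by auto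
    thus "order_bounded_set ((\<lambda>x. S x + T x) ` A)" unfolding order_bounded_set_def by blast
  qed
  thus ?thesis using S T by (simp add: UOp_iff algebra_simps)
qed

lemma U_in_neg: "T \<in> UOp \<Longrightarrow> (\<lambda>x. - T x) \<in> UOp"
proof -
  assume T: "T \<in> UOp"
  have "order_bounded_op (\<lambda>x. - T x)"
    unfolding order_bounded_op_def
  proof (intro allI impI)
    fix A :: "'a set" assume A: "order_bounded_set A"
    obtain m1 M1 where 1: "\<forall>x\<in>A. m1 \<le> T x \<and> T x \<le> M1" using U_bounded[OF T A] by blast
    have "\<forall>x\<in>A. - M1 \<le> - T x \<and> - T x \<le> - m1" using 1 by simp
    hence "(\<lambda>x. - T x) ` A \<subseteq> {- M1..- m1}" by auto
    thus "order_bounded_set ((\<lambda>x. - T x) ` A)" unfolding order_bounded_set_def by blast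
  qed
  thus ?thesis using T by (simp add: UOp_iff algebra_simps)
qed

lemma U_in_diff: "S \<in> UOp \<Longrightarrow> T \<in> UOp \<Longrightarrow> (\<lambda>x. S x - T x) \<in> UOp"
  using U_in_add[of S "\<lambda>x. - T x"] U_in_neg[of T] by simp

lemma U_in_0: "(\<lambda>x. 0) \<in> UOp"
  by (auto simp: UOp_iff order_bounded_op_def order_bounded_set_def intro!: exI[of _ 0])

lemma U_in_scale: "T \<in> UOp \<Longrightarrow> 0 \<le> c \<Longrightarrow> (\<lambda>x. c *\<^sub>R T x) \<in> UOp"
proof -
  assume T: "T \<in> UOp" and c: "0 \<le> c"
  have "order_bounded_op (\<lambda>x. c *\<^sub>R T x)"
    unfolding order_bounded_op_def
  proof (intro allI impI)
    fix A :: "'a set" assume A: "order_bounded_set A"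
    obtain m1 M1 where 1: "\<forall>x\<in>A. m1 \<le> T x \<and> T x \<le> M1" using U_bounded[OF T A] by blast
    have "\<forall>x\<in>A. c *\<^sub>R m1 \<le> c *\<^sub>R T x \<and> c *\<^sub>R T x \<le> c *\<^sub>R M1" using 1 c by (metis scaleR_left_mono)
    hence "(\<lambda>x. c *\<^sub>R T x) ` A \<subseteq> {c *\<^sub>R m1..c *\<^sub>R M1}" by auto
    thus "order_bounded_set ((\<lambda>x. c *\<^sub>R T x) ` A)" unfolding order_bounded_set_def by blast
  qed
  thus ?thesis using T by (simp add: UOp_iff scaleR_add_right)
qed

definition infU :: "('e::vector_lattice \<Rightarrow> 'f::{vector_lattice, conditionally_complete_lattice}) \<Rightarrow> ('e \<Rightarrow> 'f) \<Rightarrow> 'e \<Rightarrow> 'f" where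
  "infU R1 R2 x = Inf {R1 y + R2 (x - y) | y. y \<in> lfrag x}"

lemma infU_set_props:
  fixes R1 R2 :: "'e::vector_lattice \<Rightarrow> 'f::{vector_lattice, conditionally_complete_lattice}"
  assumes R: "R1 \<in> UOp" "R2 \<in> UOp" and A: "order_bounded_set A"
  obtains m where "\<forall>x\<in>A. \<forall>y\<in>lfrag x. m \<le> R1 y + R2 (x - y)"
proof -
  obtain a b where ab: "A \<subseteq> {a..b}" using A by (auto simp: order_bounded_set_def)
  define c where "c = labs a + labs b"
  have "order_bounded_set {-c..c}" unfolding order_bounded_set_def by (intro exI[of _ "-c"] exI[of _ c]) auto
  then obtain m1 M1 m2 M2 where 1: "\<forall>x\<in>{-c..c}. m1 \<le> R1 x \<and> R1 x \<le> M1"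
    and 2: "\<forall>x\<in>{-c..c}. m2 \<le> R2 x \<and> R2 x \<le> M2" using U_bounded[OF R(1)] U_bounded[OF R(2)] by metis
  have "\<forall>x\<in>A. \<forall>y\<in>lfrag x. m1 + m2 \<le> R1 y + R2 (x - y)"
  proof (intro ballI)
    fix x y assume x: "x \<in> A" and y: "y \<in> lfrag x"
    have "a \<le> x" "x \<le> b" using ab x by auto
    hence lx: "labs x \<le> c" unfolding c_def by (rule labs_interval)
    have "y \<in> {-c..c}" "x - y \<in> {-c..c}" using frag_interval[OF y lx] frag_interval[OF lfrag_compl[OF y] lx] by auto
    thus "m1 + m2 \<le> R1 y + R2 (x - y)" using 1 2 by (auto intro: add_mono)
  qed
  thus ?thesis by (rule that)
qed

lemma infU_basic:
  fixes R1 R2 :: "'e::vector_lattice \<Rightarrow> 'f::{vector_lattice, conditionally_complete_lattice}"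
  assumes R: "R1 \<in> UOp" "R2 \<in> UOp"
  shows infU_ne: "{R1 y + R2 (x - y) | y. y \<in> lfrag x} \<noteq> {}"
    and infU_bdd: "bdd_below {R1 y + R2 (x - y) | y. y \<in> lfrag x}"
    and infU_lower: "y \<in> lfrag x \<Longrightarrow> infU R1 R2 x \<le> R1 y + R2 (x - y)"
    and infU_le1: "infU R1 R2 x \<le> R1 x"
    and infU_le2: "infU R1 R2 x \<le> R2 x"
proof -
  show ne: "{R1 y + R2 (x - y) | y. y \<in> lfrag x} \<noteq> {}" using lfrag_0 by blast
  have ob: "order_bounded_set {x}" unfolding order_bounded_set_def by (intro exI[of _ x]) auto
  obtain m where "\<forall>x'\<in>{x}. \<forall>y\<in>lfrag x'. m \<le> R1 y + R2 (x' - y)" by (rule infU_set_props[OF R ob])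
  hence "\<forall>y\<in>lfrag x. m \<le> R1 y + R2 (x - y)" by simp
  thus bdd: "bdd_below {R1 y + R2 (x - y) | y. y \<in> lfrag x}" by (intro bdd_belowI[of _ m]) blast
  show lo: "y \<in> lfrag x \<Longrightarrow> infU R1 R2 x \<le> R1 y + R2 (x - y)" for y
    unfolding infU_def by (rule cInf_lower[OF _ bdd]) blast
  show "infU R1 R2 x \<le> R1 x" using lo[OF lfrag_self] U_zero[OF R(2)] by simp
  show "infU R1 R2 x \<le> R2 x" using lo[OF lfrag_0] U_zero[OF R(1)] by simp
qed

lemma infU_greatest:
  fixes R1 R2 k :: "'e::vector_lattice \<Rightarrow> 'f::{vector_lattice, conditionally_complete_lattice}"
  assumes R: "R1 \<in> UOp" "R2 \<in> UOp" and k: "k \<in> UOp" "\<forall>x. k x \<le> R1 x" "\<forall>x. k x \<le> R2 x"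
  shows "k x \<le> infU R1 R2 x"
  unfolding infU_def
proof (rule cInf_greatest[OF infU_ne[OF R]])
  fix v assume "v \<in> {R1 y + R2 (x - y) | y. y \<in> lfrag x}"
  then obtain y where y: "y \<in> lfrag x" and v: "v = R1 y + R2 (x - y)" by blast
  have "k x = k y + k (x - y)" using U_frag[OF k(1) y] .
  also have "\<dots> \<le> R1 y + R2 (x - y)" using k by (intro add_mono) auto
  finally show "k x \<le> v" using v by simp
qed

lemma infU_glb:
  fixes R1 R2 :: "'e::vector_lattice \<Rightarrow> 'f::{vector_lattice, conditionally_complete_lattice}"
  assumes R: "R1 \<in> UOp" "R2 \<in> UOp" and d: "ldisj x z"
  shows "infU R1 R2 (x + z) = infU R1 R2 x + infU R1 R2 z"
proof -
  let ?A = "\<lambda>x. {R1 y + R2 (x - y) | y. y \<in> lfrag x}"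
  have "?A (x + z) = {a + b | a b. a \<in> ?A x \<and> b \<in> ?A z}"
  proof (intro set_eqI iffI)
    fix v assume "v \<in> ?A (x + z)"
    then obtain y where y: "y \<in> lfrag (x + z)" and v: "v = R1 y + R2 (x + z - y)" by blast
    obtain y1 y2 where y12: "y1 \<in> lfrag x" "y2 \<in> lfrag z" "y = y1 + y2" using frag_split[OF d y] by blast
    have "R1 y = R1 y1 + R1 y2" using y12 U_add[OF R(1) lfrag_add(2)[OF d y12(1,2)]] by simp
    moreover have eq: "x + z - y = (x - y1) + (z - y2)" using y12 by (simp add: algebra_simps)
    have "R2 (x + z - y) = R2 (x - y1) + R2 (z - y2)" unfolding eq by (rule U_add[OF R(2) lfrag_add(3)[OF d y12(1,2)]])
    ultimately have "v = (R1 y1 + R2 (x - y1)) + (R1 y2 + R2 (z - y2))" using v by (simp add: algebra_simps)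
    thus "v \<in> {a + b | a b. a \<in> ?A x \<and> b \<in> ?A z}" using y12 by blast
  next
    fix v assume "v \<in> {a + b | a b. a \<in> ?A x \<and> b \<in> ?A z}"
    then obtain y1 y2 where y12: "y1 \<in> lfrag x" "y2 \<in> lfrag z"
      and v: "v = (R1 y1 + R2 (x - y1)) + (R1 y2 + R2 (z - y2))" by blast
    have "R1 (y1 + y2) = R1 y1 + R1 y2" using U_add[OF R(1) lfrag_add(2)[OF d y12(1,2)]] by simp
    moreover have eq: "x + z - (y1 + y2) = (x - y1) + (z - y2)" by (simp add: algebra_simps)
    have "R2 (x + z - (y1 + y2)) = R2 (x - y1) + R2 (z - y2)" unfolding eq by (rule U_add[OF R(2) lfrag_add(3)[OF d y12(1,2)]])
    ultimately have "v = R1 (y1 + y2) + R2 (x + z - (y1 + y2))" using v by (simp add: algebra_simps)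
    thus "v \<in> ?A (x + z)" using lfrag_add(1)[OF d y12(1,2)] by blast
  qed
  hence "infU R1 R2 (x + z) = Inf {a + b | a b. a \<in> ?A x \<and> b \<in> ?A z}" by (simp add: infU_def)
  also have "\<dots> = infU R1 R2 x + infU R1 R2 z" unfolding infU_def
    by (rule Inf_minkowski) (use infU_ne[OF R] infU_bdd[OF R] in simp_all)
  finally show ?thesis .
qed

lemma infU_in:
  fixes R1 R2 :: "'e::vector_lattice \<Rightarrow> 'f::{vector_lattice, conditionally_complete_lattice}"
  assumes R: "R1 \<in> UOp" "R2 \<in> UOp"
  shows "infU R1 R2 \<in> UOp"
  unfolding UOp_iff
proof (intro conjI allI impI)
  fix x y :: 'e assume "ldisj x y" thus "infU R1 R2 (x + y) = infU R1 R2 x + infU R1 R2 y" by (rule infU_glb[OF R])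
next
  show "order_bounded_op (infU R1 R2)" unfolding order_bounded_op_def
  proof (intro allI impI)
    fix A :: "'e set" assume A: "order_bounded_set A"
    obtain m where m: "\<forall>x\<in>A. \<forall>y\<in>lfrag x. m \<le> R1 y + R2 (x - y)" using infU_set_props[OF R A] by blast
    obtain m1 M1 where 1: "\<forall>x\<in>A. m1 \<le> R1 x \<and> R1 x \<le> M1" using U_bounded[OF R(1) A] by blast
    have "\<forall>x\<in>A. m \<le> infU R1 R2 x \<and> infU R1 R2 x \<le> M1"
    proof
      fix x assume x: "x \<in> A"
      have "m \<le> infU R1 R2 x" unfolding infU_def using m x by (intro cInf_greatest[OF infU_ne[OF R]]) auto
      moreover have "infU R1 R2 x \<le> M1" using infU_le1[OF R, of x] 1 x by (auto intro: order.trans)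
      ultimately show "m \<le> infU R1 R2 x \<and> infU R1 R2 x \<le> M1" by simp
    qed
    hence "infU R1 R2 ` A \<subseteq> {m..M1}" by auto
    thus "order_bounded_set (infU R1 R2 ` A)" unfolding order_bounded_set_def by blast
  qed
qed




lemma infU_mono:
  fixes A B A' B' :: "'e::vector_lattice \<Rightarrow> 'f::{vector_lattice, conditionally_complete_lattice}"
  assumes "A \<in> UOp" "B \<in> UOp" "A' \<in> UOp" "B' \<in> UOp" "\<forall>x. A x \<le> A' x" "\<forall>x. B x \<le> B' x"
  shows "infU A B x \<le> infU A' B' x"
proof (rule infU_greatest[OF assms(3,4) infU_in[OF assms(1,2)]])
  show "\<forall>x. infU A B x \<le> A' x" using infU_le1[OF assms(1,2)] assms(5) by (metis order.trans)
  show "\<forall>x. infU A B x \<le> B' x" using infU_le2[OF assms(1,2)] assms(6) by (metis order.trans)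
qed

lemma infU_nonneg:
  fixes A B :: "'e::vector_lattice \<Rightarrow> 'f::{vector_lattice, conditionally_complete_lattice}"
  assumes "A \<in> UOp" "B \<in> UOp" "\<forall>x. 0 \<le> A x" "\<forall>x. 0 \<le> B x"
  shows "0 \<le> infU A B x"
  using infU_greatest[OF assms(1,2) U_in_0] assms by simp

lemma infU_commute:
  fixes A B :: "'e::vector_lattice \<Rightarrow> 'f::{vector_lattice, conditionally_complete_lattice}"
  assumes "A \<in> UOp" "B \<in> UOp"
  shows "infU A B x = infU B A x"
  using assms infU_le1 infU_le2
  by (intro order_antisym infU_greatest infU_in) auto

lemma infU_self:
  fixes A :: "'e::vector_lattice \<Rightarrow> 'f::{vector_lattice, conditionally_complete_lattice}"
  assumes "A \<in> UOp" shows "infU A A x = A x"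
  using assms infU_le1[of A A x] infU_greatest[of A A A x] by auto

lemma infU_translate:
  fixes A B C :: "'e::vector_lattice \<Rightarrow> 'f::{vector_lattice, conditionally_complete_lattice}"
  assumes A: "A \<in> UOp" and B: "B \<in> UOp" and C: "C \<in> UOp"
  shows "infU (\<lambda>x. A x + C x) (\<lambda>x. B x + C x) x = infU A B x + C x"
proof (rule order_antisym)
  have AC: "(\<lambda>x. A x + C x) \<in> UOp" "(\<lambda>x. B x + C x) \<in> UOp" using A B C by (simp_all add: U_in_add)
  let ?M = "\<lambda>x. infU (\<lambda>x. A x + C x) (\<lambda>x. B x + C x) x - C x"
  have "?M \<in> UOp" using AC C by (intro U_in_diff infU_in)
  moreover have "\<forall>x. ?M x \<le> A x" "\<forall>x. ?M x \<le> B x"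
    using infU_le1[OF AC] infU_le2[OF AC] by (simp_all add: diff_le_eq)
  ultimately have "?M x \<le> infU A B x" by (intro infU_greatest[OF A B])
  thus "infU (\<lambda>x. A x + C x) (\<lambda>x. B x + C x) x \<le> infU A B x + C x" by (simp add: diff_le_eq)
  have K: "(\<lambda>x. infU A B x + C x) \<in> UOp" using A B C by (intro U_in_add infU_in)
  have K1: "\<forall>x. infU A B x + C x \<le> A x + C x" "\<forall>x. infU A B x + C x \<le> B x + C x"
    using infU_le1[OF A B] infU_le2[OF A B] by (simp_all add: add_right_mono)
  show "infU A B x + C x \<le> infU (\<lambda>x. A x + C x) (\<lambda>x. B x + C x) x"
    using infU_greatest[OF AC K K1] by simp
qed

lemma infU_add_le:
  fixes A B C :: "'e::vector_lattice \<Rightarrow> 'f::{vector_lattice, conditionally_complete_lattice}"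
  assumes A: "A \<in> UOp" and B: "B \<in> UOp" and C: "C \<in> UOp"
    and pos: "\<forall>x. 0 \<le> A x" "\<forall>x. 0 \<le> B x" "\<forall>x. 0 \<le> C x"
  shows "infU A (\<lambda>x. B x + C x) x \<le> infU A B x + infU A C x"
proof -
  have BC: "(\<lambda>x. B x + C x) \<in> UOp" using B C by (rule U_in_add)
  have iAC: "infU A C \<in> UOp" using A C by (rule infU_in)
  have iAB: "infU A B \<in> UOp" using A B by (rule infU_in)
  have e1: "infU A B x + infU A C x = infU (\<lambda>x. A x + infU A C x) (\<lambda>x. B x + infU A C x) x"
    using infU_translate[OF A B iAC] by simp
  have "\<forall>x. infU A (\<lambda>x. B x + C x) x \<le> A x + infU A C x"
    using infU_le1[OF A BC] infU_nonneg[OF A C pos(1,3)] by (metis add_increasing2)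
  moreover have "\<forall>x. infU A (\<lambda>x. B x + C x) x \<le> B x + infU A C x"
  proof
    fix x
    have "B x + infU A C x = infU (\<lambda>x. A x + B x) (\<lambda>x. C x + B x) x"
      using infU_translate[OF A C B] by (simp add: add.commute)
    moreover have "infU A (\<lambda>x. B x + C x) x \<le> infU (\<lambda>x. A x + B x) (\<lambda>x. C x + B x) x"
      using A B C BC pos by (intro infU_mono U_in_add) (auto simp: add.commute add_increasing2)
    ultimately show "infU A (\<lambda>x. B x + C x) x \<le> B x + infU A C x" by simp
  qed
  ultimately have "infU A (\<lambda>x. B x + C x) x \<le> infU (\<lambda>x. A x + infU A C x) (\<lambda>x. B x + infU A C x) x"
    using A B C iAC BC by (intro infU_greatest U_in_add infU_in) auto
  thus ?thesis using e1 by simp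
qed

lemma infU_add_pos_le:
  fixes A B E :: "'e::vector_lattice \<Rightarrow> 'f::{vector_lattice, conditionally_complete_lattice}"
  assumes A: "A \<in> UOp" and B: "B \<in> UOp" and E: "E \<in> UOp" and pos: "\<forall>x. 0 \<le> E x"
  shows "infU A (\<lambda>x. B x + E x) x \<le> infU A B x + E x"
proof -
  have "infU A (\<lambda>x. B x + E x) x \<le> infU (\<lambda>x. A x + E x) (\<lambda>x. B x + E x) x"
    using A B E pos by (intro infU_mono U_in_add) (auto simp: add_increasing2)
  also have "\<dots> = infU A B x + E x" by (rule infU_translate[OF A B E])
  finally show ?thesis .
qed

definition supU :: "('e::vector_lattice \<Rightarrow> 'f::{vector_lattice, conditionally_complete_lattice}) \<Rightarrow> ('e \<Rightarrow> 'f) \<Rightarrow> 'e \<Rightarrow> 'f" where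
  "supU R1 R2 x = R1 x + R2 x - infU R1 R2 x"

lemma supU_props:
  fixes R1 R2 :: "'e::vector_lattice \<Rightarrow> 'f::{vector_lattice, conditionally_complete_lattice}"
  assumes R: "R1 \<in> UOp" "R2 \<in> UOp"
  shows supU_in: "supU R1 R2 \<in> UOp"
    and supU_ge1: "R1 x \<le> supU R1 R2 x"
    and supU_ge2: "R2 x \<le> supU R1 R2 x"
    and supU_least: "k \<in> UOp \<Longrightarrow> \<forall>x. R1 x \<le> k x \<Longrightarrow> \<forall>x. R2 x \<le> k x \<Longrightarrow> supU R1 R2 x \<le> k x"
proof -
  have "(\<lambda>x. R1 x + R2 x - infU R1 R2 x) \<in> UOp" using R by (intro U_in_diff U_in_add infU_in)
  thus "supU R1 R2 \<in> UOp" by (simp add: supU_def[abs_def])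
  show "R1 x \<le> supU R1 R2 x" using infU_le2[OF R, of x] by (simp add: supU_def)
  show "R2 x \<le> supU R1 R2 x" using infU_le1[OF R, of x] by (simp add: supU_def)
  assume k: "k \<in> UOp" "\<forall>x. R1 x \<le> k x" "\<forall>x. R2 x \<le> k x"
  have "(\<lambda>x. R1 x + R2 x - k x) \<in> UOp" using R k by (intro U_in_diff U_in_add)
  moreover have "\<forall>x. R1 x + R2 x - k x \<le> R1 x" "\<forall>x. R1 x + R2 x - k x \<le> R2 x"
    using k by (auto simp: diff_le_eq add.commute add_left_mono)
  ultimately have "R1 x + R2 x - k x \<le> infU R1 R2 x" using infU_greatest[OF R, of "\<lambda>x. R1 x + R2 x - k x"] by simp
  thus "supU R1 R2 x \<le> k x" by (simp add: supU_def diff_le_eq le_diff_eq add.commute)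
qed

lemma U_is_inf_iff:
  fixes f g h :: "'e::vector_lattice \<Rightarrow> 'f::{vector_lattice, conditionally_complete_lattice}"
  assumes "f \<in> UOp" "g \<in> UOp"
  shows "U_is_inf f g h \<longleftrightarrow> h = infU f g"
proof
  assume h: "U_is_inf f g h"
  hence hU: "h \<in> UOp" "\<forall>x. h x \<le> f x" "\<forall>x. h x \<le> g x" by (auto simp: U_is_inf_def le_fun_def)
  have "\<forall>x. h x \<le> infU f g x" using hU by (auto intro: infU_greatest[OF assms])
  moreover have "infU f g \<le> h" using h infU_in[OF assms] infU_le1[OF assms] infU_le2[OF assms]
    by (auto simp: U_is_inf_def le_fun_def)
  ultimately show "h = infU f g" by (auto simp: le_fun_def intro: order_antisym)
next
  assume "h = infU f g"
  thus "U_is_inf f g h" using infU_in[OF assms] infU_le1[OF assms] infU_le2[OF assms] infU_greatest[OF assms]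
    by (auto simp: U_is_inf_def le_fun_def)
qed

lemma U_is_sup_iff:
  fixes f g h :: "'e::vector_lattice \<Rightarrow> 'f::{vector_lattice, conditionally_complete_lattice}"
  assumes "f \<in> UOp" "g \<in> UOp"
  shows "U_is_sup f g h \<longleftrightarrow> h = supU f g"
proof
  assume h: "U_is_sup f g h"
  hence hU: "h \<in> UOp" "\<forall>x. f x \<le> h x" "\<forall>x. g x \<le> h x" by (auto simp: U_is_sup_def le_fun_def)
  have "\<forall>x. supU f g x \<le> h x" using hU by (auto intro: supU_least[OF assms])
  moreover have "h \<le> supU f g" using h supU_in[OF assms] supU_ge1[OF assms] supU_ge2[OF assms]
    by (auto simp: U_is_sup_def le_fun_def)
  ultimately show "h = supU f g" by (auto simp: le_fun_def intro: order_antisym)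
next
  assume "h = supU f g"
  thus "U_is_sup f g h" using supU_in[OF assms] supU_ge1[OF assms] supU_ge2[OF assms] supU_least[OF assms]
    by (auto simp: U_is_sup_def le_fun_def)
qed

definition labsU :: "('e::vector_lattice \<Rightarrow> 'f::{vector_lattice, conditionally_complete_lattice}) \<Rightarrow> 'e \<Rightarrow> 'f" where
  "labsU R = supU R (\<lambda>x. - R x)"

lemma labsU_props:
  fixes R :: "'e::vector_lattice \<Rightarrow> 'f::{vector_lattice, conditionally_complete_lattice}"
  assumes R: "R \<in> UOp"
  shows labsU_in: "labsU R \<in> UOp"
    and labsU_ge: "R x \<le> labsU R x"
    and labsU_ge_neg: "- R x \<le> labsU R x"
    and labsU_least: "k \<in> UOp \<Longrightarrow> \<forall>x. R x \<le> k x \<Longrightarrow> \<forall>x. - R x \<le> k x \<Longrightarrow> labsU R x \<le> k x"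
    and labsU_nonneg: "0 \<le> labsU R x"
proof -
  have nR: "(\<lambda>x. - R x) \<in> UOp" using R by (rule U_in_neg)
  show "labsU R \<in> UOp" unfolding labsU_def using R nR by (rule supU_in)
  show 1: "R x \<le> labsU R x" unfolding labsU_def using supU_ge1[OF R nR] .
  show 2: "- R x \<le> labsU R x" unfolding labsU_def using supU_ge2[OF R nR] by simp
  show "k \<in> UOp \<Longrightarrow> \<forall>x. R x \<le> k x \<Longrightarrow> \<forall>x. - R x \<le> k x \<Longrightarrow> labsU R x \<le> k x"
    unfolding labsU_def using supU_least[OF R nR] by simp
  have "R x + - R x \<le> labsU R x + labsU R x" using 1 2 by (rule add_mono)
  thus "0 \<le> labsU R x" by simp
qed

lemma labsU_pos:
  fixes R :: "'e::vector_lattice \<Rightarrow> 'f::{vector_lattice, conditionally_complete_lattice}"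
  assumes R: "R \<in> UOp" and pos: "\<forall>x. 0 \<le> R x"
  shows "labsU R = R"
proof
  fix x
  have "labsU R x \<le> R x" using R pos
    by (intro labsU_least[OF R]) (auto intro: order.trans[of _ 0])
  thus "labsU R x = R x" using labsU_ge[OF R, of x] by simp
qed

lemma U_disj_iff:
  fixes R Q :: "'e::vector_lattice \<Rightarrow> 'f::{vector_lattice, conditionally_complete_lattice}"
  assumes R: "R \<in> UOp" and Q: "Q \<in> UOp"
  shows "U_disj R Q \<longleftrightarrow> (\<forall>x. infU (labsU R) (labsU Q) x = 0)"
proof -
  have nR: "(\<lambda>x. - R x) \<in> UOp" using R by (rule U_in_neg)
  have nQ: "(\<lambda>x. - Q x) \<in> UOp" using Q by (rule U_in_neg)
  have "U_disj R Q \<longleftrightarrow> U_is_inf (labsU R) (labsU Q) (\<lambda>_. 0)"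
    unfolding U_disj_def U_is_sup_iff[OF R nR] U_is_sup_iff[OF Q nQ] labsU_def by simp
  also have "\<dots> \<longleftrightarrow> (\<lambda>_. 0) = infU (labsU R) (labsU Q)"
    by (rule U_is_inf_iff[OF labsU_in[OF R] labsU_in[OF Q]])
  also have "\<dots> \<longleftrightarrow> (\<forall>x. infU (labsU R) (labsU Q) x = 0)" by (auto simp: fun_eq_iff)
  finally show ?thesis .
qed

lemma U_disj_sym:
  fixes R Q :: "'e::vector_lattice \<Rightarrow> 'f::{vector_lattice, conditionally_complete_lattice}"
  assumes R: "R \<in> UOp" and Q: "Q \<in> UOp"
  shows "U_disj R Q \<longleftrightarrow> U_disj Q R"
  unfolding U_disj_iff[OF R Q] U_disj_iff[OF Q R]
  using infU_commute[OF labsU_in[OF R] labsU_in[OF Q]] by simp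

lemma labsU_diff_le:
  fixes R1 R2 :: "'e::vector_lattice \<Rightarrow> 'f::{vector_lattice, conditionally_complete_lattice}"
  assumes R: "R1 \<in> UOp" "R2 \<in> UOp"
  shows "labsU (\<lambda>x. R1 x - R2 x) x \<le> labsU R1 x + labsU R2 x"
proof (rule labsU_least)
  show "(\<lambda>x. R1 x - R2 x) \<in> UOp" using R by (rule U_in_diff)
  show "(\<lambda>x. labsU R1 x + labsU R2 x) \<in> UOp" using R by (intro U_in_add labsU_in)
  show "\<forall>x. R1 x - R2 x \<le> labsU R1 x + labsU R2 x"
    using labsU_ge[OF R(1)] labsU_ge_neg[OF R(2)] by (metis add_mono diff_conv_add_uminus)
  show "\<forall>x. - (R1 x - R2 x) \<le> labsU R1 x + labsU R2 x"
    using labsU_ge_neg[OF R(1)] labsU_ge[OF R(2)] by (metis add_mono minus_diff_eq diff_conv_add_uminus add.commute)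
qed

lemma disj_closed_diff:
  fixes R1 R2 C :: "'e::vector_lattice \<Rightarrow> 'f::{vector_lattice, conditionally_complete_lattice}"
  assumes R: "R1 \<in> UOp" "R2 \<in> UOp" and C: "C \<in> UOp" "\<forall>x. 0 \<le> C x"
    and d: "\<forall>x. infU (labsU R1) C x = 0" "\<forall>x. infU (labsU R2) C x = 0"
  shows "infU (labsU (\<lambda>x. R1 x - R2 x)) C x = 0"
proof (rule order_antisym)
  have D: "(\<lambda>x. R1 x - R2 x) \<in> UOp" using R by (rule U_in_diff)
  have L: "labsU R1 \<in> UOp" "labsU R2 \<in> UOp" using R by (simp_all add: labsU_in)
  have "infU (labsU (\<lambda>x. R1 x - R2 x)) C x \<le> infU (\<lambda>x. labsU R1 x + labsU R2 x) C x"
    using labsU_diff_le[OF R] D L C R by (intro infU_mono labsU_in U_in_add) auto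
  also have "\<dots> = infU C (\<lambda>x. labsU R1 x + labsU R2 x) x"
    using L C by (intro infU_commute U_in_add)
  also have "\<dots> \<le> infU C (labsU R1) x + infU C (labsU R2) x"
    using C L R by (intro infU_add_le) (auto intro: labsU_nonneg)
  also have "\<dots> = 0" using d infU_commute[OF C(1) L(1)] infU_commute[OF C(1) L(2)] by simp
  finally show "infU (labsU (\<lambda>x. R1 x - R2 x)) C x \<le> 0" .
  show "0 \<le> infU (labsU (\<lambda>x. R1 x - R2 x)) C x"
    using D C by (intro infU_nonneg labsU_in) (auto intro: labsU_nonneg)
qed

lemma U_disj_diff:
  fixes R1 R2 Q :: "'e::vector_lattice \<Rightarrow> 'f::{vector_lattice, conditionally_complete_lattice}"
  assumes R: "R1 \<in> UOp" "R2 \<in> UOp" and Q: "Q \<in> UOp" and d: "U_disj R1 Q" "U_disj R2 Q"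
  shows "U_disj (\<lambda>x. R1 x - R2 x) Q"
  using d unfolding U_disj_iff[OF R(1) Q] U_disj_iff[OF R(2) Q] U_disj_iff[OF U_in_diff[OF R] Q]
  using disj_closed_diff[OF R labsU_in[OF Q]] labsU_nonneg[OF Q] by blast

lemma U_disj_self:
  fixes R :: "'e::vector_lattice \<Rightarrow> 'f::{vector_lattice, conditionally_complete_lattice}"
  assumes R: "R \<in> UOp" and d: "U_disj R R"
  shows "R = (\<lambda>x. 0)"
proof
  fix x
  have "labsU R x = 0" using d infU_self[OF labsU_in[OF R]] unfolding U_disj_iff[OF R R] by simp
  hence "R x \<le> 0" "- R x \<le> 0" using labsU_ge[OF R, of x] labsU_ge_neg[OF R, of x] by simp_all
  thus "R x = 0" by simp
qed

lemma perp_pp_unique: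
  fixes S T P1 P2 :: "'e::vector_lattice \<Rightarrow> 'f::{vector_lattice, conditionally_complete_lattice}"
  assumes S: "S \<in> UOp" and T: "T \<in> UOp"
    and P1: "P1 \<in> U_perpperp S" "(\<lambda>z. T z - P1 z) \<in> U_perp S"
    and P2: "P2 \<in> U_perpperp S" "(\<lambda>z. T z - P2 z) \<in> U_perp S"
  shows "P1 = P2"
proof -
  have U: "P1 \<in> UOp" "P2 \<in> UOp" using P1 P2 by (auto simp: U_perpperp_def)
  define D where "D = (\<lambda>x. P1 x - P2 x)"
  have DU: "D \<in> UOp" unfolding D_def using U by (rule U_in_diff)
  have "(\<lambda>x. (T x - P2 x) - (T x - P1 x)) = D" by (simp add: D_def fun_eq_iff)
  moreover have "U_disj (\<lambda>x. (T x - P2 x) - (T x - P1 x)) S"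
    using P1 P2 by (intro U_disj_diff[OF U_in_diff[OF T U(2)] U_in_diff[OF T U(1)] S]) (auto simp: U_perp_def)
  ultimately have Dp: "D \<in> U_perp S" using DU by (simp add: U_perp_def)
  have "\<forall>Q\<in>U_perp S. U_disj D Q"
  proof
    fix Q assume Q: "Q \<in> U_perp S"
    hence QU: "Q \<in> UOp" by (simp add: U_perp_def)
    show "U_disj D Q" unfolding D_def using P1 P2 Q QU U
      by (intro U_disj_diff) (auto simp: U_perpperp_def)
  qed
  hence "U_disj D D" using Dp by blast
  hence "D = (\<lambda>x. 0)" using DU by (intro U_disj_self)
  thus ?thesis by (simp add: D_def fun_eq_iff)
qed

lemma perp_pp_unique2:
  fixes S T P1 P2 :: "'e::vector_lattice \<Rightarrow> 'f::{vector_lattice, conditionally_complete_lattice}"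
  assumes S: "S \<in> UOp" and T: "T \<in> UOp"
    and P1: "P1 \<in> U_perp S" "(\<lambda>z. T z - P1 z) \<in> U_perpperp S"
    and P2: "P2 \<in> U_perp S" "(\<lambda>z. T z - P2 z) \<in> U_perpperp S"
  shows "P1 = P2"
proof -
  have "(\<lambda>z. T z - P1 z) = (\<lambda>z. T z - P2 z)"
  proof (rule perp_pp_unique[OF S T])
    show "(\<lambda>z. T z - P1 z) \<in> U_perpperp S" "(\<lambda>z. T z - P2 z) \<in> U_perpperp S" by fact+
    show "(\<lambda>z. T z - (T z - P1 z)) \<in> U_perp S" "(\<lambda>z. T z - (T z - P2 z)) \<in> U_perp S"
      using P1 P2 by simp_all
  qed
  thus ?thesis by (auto simp: fun_eq_iff)
qed



lemma Sup_add_incseq: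
  fixes a b :: "nat \<Rightarrow> 'a::{lattice_ab_group_add, conditionally_complete_lattice}"
  assumes a: "incseq a" and b: "incseq b" and ba: "bdd_above (range a)" and bb: "bdd_above (range b)"
  shows "Sup (range (\<lambda>n. a n + b n)) = Sup (range a) + Sup (range b)"
proof (rule order_antisym)
  show "Sup (range (\<lambda>n. a n + b n)) \<le> Sup (range a) + Sup (range b)"
    by (rule cSUP_least) (auto intro!: add_mono cSUP_upper ba bb)
  have bab: "bdd_above (range (\<lambda>n. a n + b n))"
  proof -
    obtain A where "\<forall>n. a n \<le> A" using ba by (auto simp: bdd_above_def)
    moreover obtain B where "\<forall>n. b n \<le> B" using bb by (auto simp: bdd_above_def)
    ultimately show ?thesis by (intro bdd_aboveI[of _ "A + B"]) (auto intro: add_mono)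
  qed
  have "\<forall>k. Sup (range a) \<le> Sup (range (\<lambda>n. a n + b n)) - b k"
  proof
    fix k
    have "\<forall>m. a m \<le> Sup (range (\<lambda>n. a n + b n)) - b k"
    proof
      fix m
      have "a m + b k \<le> a (max m k) + b (max m k)"
        using a b by (intro add_mono) (auto simp: incseq_def)
      also have "\<dots> \<le> Sup (range (\<lambda>n. a n + b n))" by (rule cSUP_upper[OF UNIV_I bab])
      finally show "a m \<le> Sup (range (\<lambda>n. a n + b n)) - b k" by (simp add: le_diff_eq)
    qed
    thus "Sup (range a) \<le> Sup (range (\<lambda>n. a n + b n)) - b k" by (intro cSUP_least) auto
  qed
  hence "\<forall>k. b k \<le> Sup (range (\<lambda>n. a n + b n)) - Sup (range a)"
    by (metis add.commute le_diff_eq)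
  hence "Sup (range b) \<le> Sup (range (\<lambda>n. a n + b n)) - Sup (range a)" by (intro cSUP_least) auto
  thus "Sup (range a) + Sup (range b) \<le> Sup (range (\<lambda>n. a n + b n))"
    by (metis add.commute le_diff_eq)
qed

definition Qn :: "('e::vector_lattice \<Rightarrow> 'f::{vector_lattice, conditionally_complete_lattice}) \<Rightarrow> ('e \<Rightarrow> 'f) \<Rightarrow> nat \<Rightarrow> 'e \<Rightarrow> 'f" where
  "Qn S T n = infU T (\<lambda>x. real n *\<^sub>R S x)"

definition PP :: "('e::vector_lattice \<Rightarrow> 'f::{vector_lattice, conditionally_complete_lattice}) \<Rightarrow> ('e \<Rightarrow> 'f) \<Rightarrow> 'e \<Rightarrow> 'f" where
  "PP S T x = Sup (range (\<lambda>n. Qn S T n x))"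

locale ST =
  fixes S T :: "'e::vector_lattice \<Rightarrow> 'f::{vector_lattice, conditionally_complete_lattice}"
  assumes S: "S \<in> UOp" and T: "T \<in> UOp" and Spos: "\<forall>x. 0 \<le> S x" and Tpos: "\<forall>x. 0 \<le> T x"
begin

lemma Sn_in: "(\<lambda>x. real n *\<^sub>R S x) \<in> UOp" using S by (rule U_in_scale) simp
lemma Sn_pos: "\<forall>x. 0 \<le> real n *\<^sub>R S x" using Spos by (auto intro: scaleR_nonneg_nonneg)

lemma Qn_in: "Qn S T n \<in> UOp" unfolding Qn_def using T Sn_in by (rule infU_in)
lemma Qn_nonneg: "0 \<le> Qn S T n x" unfolding Qn_def using T Sn_in Tpos Sn_pos by (rule infU_nonneg)
lemma Qn_le_T: "Qn S T n x \<le> T x" unfolding Qn_def using T Sn_in by (rule infU_le1)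
lemma Qn_le_S: "Qn S T n x \<le> real n *\<^sub>R S x" unfolding Qn_def using T Sn_in by (rule infU_le2)
lemma Qn_Suc: "Qn S T n x \<le> Qn S T (Suc n) x"
  unfolding Qn_def
proof (rule infU_mono[OF T Sn_in T Sn_in])
  show "\<forall>x. T x \<le> T x" by simp
  show "\<forall>x. real n *\<^sub>R S x \<le> real (Suc n) *\<^sub>R S x" using Spos by (auto intro: scaleR_right_mono)
qed
lemma Qn_inc: "incseq (\<lambda>n. Qn S T n x)" by (rule incseq_SucI) (rule Qn_Suc)
lemma Qn_bdd: "bdd_above (range (\<lambda>n. Qn S T n x))"
  by (rule bdd_aboveI[of _ "T x"]) (auto intro: Qn_le_T)

lemma PP_ge: "Qn S T n x \<le> PP S T x" unfolding PP_def by (rule cSUP_upper[OF UNIV_I Qn_bdd])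
lemma PP_le: "PP S T x \<le> T x" unfolding PP_def by (rule cSUP_least) (auto intro: Qn_le_T)
lemma PP_nonneg: "0 \<le> PP S T x" using Qn_nonneg[of 0 x] PP_ge[of 0 x] by (rule order.trans)

lemma PP_in: "PP S T \<in> UOp"
  unfolding UOp_iff
proof (intro conjI allI impI)
  fix x y :: 'e assume d: "ldisj x y"
  have "PP S T (x + y) = Sup (range (\<lambda>n. Qn S T n x + Qn S T n y))"
    unfolding PP_def using U_add[OF Qn_in d] by simp
  also have "\<dots> = PP S T x + PP S T y" unfolding PP_def
    by (rule Sup_add_incseq[OF Qn_inc Qn_inc Qn_bdd Qn_bdd])
  finally show "PP S T (x + y) = PP S T x + PP S T y" .
next
  show "order_bounded_op (PP S T)" unfolding order_bounded_op_def
  proof (intro allI impI)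
    fix A :: "'e set" assume A: "order_bounded_set A"
    obtain m M where "\<forall>x\<in>A. m \<le> T x \<and> T x \<le> M" using U_bounded[OF T A] by blast
    hence "\<forall>x\<in>A. 0 \<le> PP S T x \<and> PP S T x \<le> M" using PP_nonneg PP_le by (metis order.trans)
    hence "PP S T ` A \<subseteq> {0..M}" by auto
    thus "order_bounded_set (PP S T ` A)" unfolding order_bounded_set_def by blast
  qed
qed

abbreviation "DD \<equiv> (\<lambda>x. T x - PP S T x)"

lemma DD_in: "DD \<in> UOp" using T PP_in by (rule U_in_diff)
lemma DD_nonneg: "0 \<le> DD x" using PP_le by simp

lemma DS_zero: "infU DD S x = 0"
proof (rule order_antisym)
  show "0 \<le> infU DD S x" using DD_in S DD_nonneg Spos by (intro infU_nonneg) auto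
  have "\<forall>n. infU DD S x \<le> Sup (range (\<lambda>n. Qn S T n x)) - Qn S T n x"
  proof
    fix n
    have TQ: "(\<lambda>x. T x - Qn S T n x) \<in> UOp" using T Qn_in by (rule U_in_diff)
    have h1: "infU DD S x \<le> infU (\<lambda>x. T x - Qn S T n x) S x"
      using DD_in TQ S PP_ge by (intro infU_mono) (auto intro: diff_left_mono)
    have h2: "infU (\<lambda>x. T x - Qn S T n x) S x + Qn S T n x \<le> Qn S T (Suc n) x"
    proof -
      let ?M = "\<lambda>x. infU (\<lambda>x. T x - Qn S T n x) S x + Qn S T n x"
      have "?M \<in> UOp" using TQ S Qn_in by (intro U_in_add infU_in)
      moreover have "\<forall>x. ?M x \<le> T x" using infU_le1[OF TQ S] by (simp add: le_diff_eq)
      moreover have "\<forall>x. ?M x \<le> real (Suc n) *\<^sub>R S x"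
      proof
        fix x
        have "?M x \<le> S x + real n *\<^sub>R S x" using infU_le2[OF TQ S] Qn_le_S by (rule add_mono)
        thus "?M x \<le> real (Suc n) *\<^sub>R S x" by (simp add: algebra_simps)
      qed
      ultimately show ?thesis unfolding Qn_def[of S T "Suc n"]
        by (intro infU_greatest[OF T Sn_in]) (auto simp: Qn_def)
    qed
    have "infU DD S x + Qn S T n x \<le> infU (\<lambda>x. T x - Qn S T n x) S x + Qn S T n x"
      using h1 by (rule add_right_mono)
    also note h2
    also note PP_ge[of "Suc n" x]
    finally have "infU DD S x + Qn S T n x \<le> PP S T x" .
    thus "infU DD S x \<le> Sup (range (\<lambda>n. Qn S T n x)) - Qn S T n x"
      by (simp only: PP_def le_diff_eq)
  qed
  thus "infU DD S x \<le> 0" by (rule sup_trick[OF Qn_bdd])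
qed

lemma DD_perp: "DD \<in> U_perp S"
proof -
  have "U_disj DD S" unfolding U_disj_iff[OF DD_in S]
    using labsU_pos[OF DD_in] DD_nonneg labsU_pos[OF S Spos] DS_zero by simp
  thus ?thesis using DD_in by (simp add: U_perp_def)
qed

lemma PP_pp: "PP S T \<in> U_perpperp S"
proof -
  have "U_disj (PP S T) Q" if Q: "Q \<in> U_perp S" for Q
  proof -
    have QU: "Q \<in> UOp" and dQ: "U_disj Q S" using Q by (auto simp: U_perp_def)
    define a where "a = labsU Q"
    have aU: "a \<in> UOp" and a0: "\<forall>x. 0 \<le> a x" using QU by (auto simp: a_def intro: labsU_in labsU_nonneg)
    have aS: "\<forall>x. infU a S x = 0" using dQ unfolding U_disj_iff[OF QU S] labsU_pos[OF S Spos] a_def .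
    have aSn: "infU a (\<lambda>x. real n *\<^sub>R S x) x \<le> 0" for n x
    proof (induction n arbitrary: x)
      case 0 thus ?case using infU_le2[OF aU Sn_in, of 0 x] by simp
    next
      case (Suc n)
      have e: "(\<lambda>x. real (Suc n) *\<^sub>R S x) = (\<lambda>x. real n *\<^sub>R S x + S x)" by (simp add: algebra_simps fun_eq_iff)
      have "infU a (\<lambda>x. real n *\<^sub>R S x + S x) x \<le> infU a (\<lambda>x. real n *\<^sub>R S x) x + infU a S x"
        using aU Sn_in S a0 Sn_pos Spos by (intro infU_add_le) auto
      also have "\<dots> \<le> 0" using Suc aS by simp
      finally show ?case unfolding e .
    qed
    have "infU a (PP S T) x \<le> 0" for x
    proof -
      have "\<forall>n. infU a (PP S T) x \<le> Sup (range (\<lambda>n. Qn S T n x)) - Qn S T n x"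
      proof
        fix n
        have E: "(\<lambda>x. PP S T x - Qn S T n x) \<in> UOp" using PP_in Qn_in by (rule U_in_diff)
        have "infU a (PP S T) x = infU a (\<lambda>x. Qn S T n x + (PP S T x - Qn S T n x)) x" by simp
        also have "\<dots> \<le> infU a (Qn S T n) x + (PP S T x - Qn S T n x)"
          using aU Qn_in E PP_ge by (intro infU_add_pos_le) (auto simp: le_diff_eq)
        also have "infU a (Qn S T n) x \<le> infU a (\<lambda>x. real n *\<^sub>R S x) x"
          using aU Qn_in Sn_in Qn_le_S by (intro infU_mono) auto
        hence "infU a (Qn S T n) x \<le> 0" using aSn[of n x] by simp
        finally show "infU a (PP S T) x \<le> Sup (range (\<lambda>n. Qn S T n x)) - Qn S T n x"
          by (simp add: PP_def)
      qed
      thus ?thesis by (rule sup_trick[OF Qn_bdd])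
    qed
    moreover have pp0: "\<forall>x. 0 \<le> PP S T x" using PP_nonneg by simp
    ultimately have "\<forall>x. infU (labsU (PP S T)) (labsU Q) x = 0"
      using infU_commute[OF aU PP_in] infU_nonneg[OF aU PP_in a0] PP_nonneg
      unfolding labsU_pos[OF PP_in pp0] a_def[symmetric]
      by (metis order_antisym)
    thus ?thesis unfolding U_disj_iff[OF PP_in QU] .
  qed
  thus ?thesis using PP_in by (auto simp: U_perpperp_def)
qed

lemma piS_eq: "pi_S S T = PP S T"
  unfolding pi_S_def
proof (rule the_equality)
  show "PP S T \<in> U_perpperp S \<and> DD \<in> U_perp S" using PP_pp DD_perp by simp
  fix P assume "P \<in> U_perpperp S \<and> (\<lambda>z. T z - P z) \<in> U_perp S"
  thus "P = PP S T" using perp_pp_unique[OF S T, of P "PP S T"] PP_pp DD_perp by auto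
qed

lemma piSperp_eq: "pi_S_perp S T = DD"
  unfolding pi_S_perp_def
proof (rule the_equality)
  have "(\<lambda>z. T z - DD z) = PP S T" by (simp add: fun_eq_iff)
  thus "DD \<in> U_perp S \<and> (\<lambda>z. T z - DD z) \<in> U_perpperp S" using PP_pp DD_perp by simp
  fix P assume P: "P \<in> U_perp S \<and> (\<lambda>z. T z - P z) \<in> U_perpperp S"
  show "P = DD"
  proof (rule perp_pp_unique2[OF S T])
    show "P \<in> U_perp S" "(\<lambda>z. T z - P z) \<in> U_perpperp S" using P by auto
    show "DD \<in> U_perp S" by (rule DD_perp)
    have "(\<lambda>z. T z - DD z) = PP S T" by (simp add: fun_eq_iff)
    thus "(\<lambda>z. T z - DD z) \<in> U_perpperp S" using PP_pp by simp
  qed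
qed

end



lemma archimedean_F:
  fixes d e :: "'a::{vector_lattice, conditionally_complete_lattice}"
  assumes e: "0 \<le> e" and h: "\<forall>t>0. d \<le> t *\<^sub>R e"
  shows "d \<le> 0"
proof -
  define M where "M = Inf ((\<lambda>t. t *\<^sub>R e) ` {0<..})"
  have ne: "(\<lambda>t. t *\<^sub>R e) ` {0<..} \<noteq> {}" by auto
  have bdd: "bdd_below ((\<lambda>t. t *\<^sub>R e) ` {0<..})"
    using e by (intro bdd_belowI[of _ 0]) (auto intro: scaleR_nonneg_nonneg)
  have dM: "d \<le> M" unfolding M_def using h by (intro cInf_greatest[OF ne]) auto
  have h2: "\<forall>v\<in>(\<lambda>t. t *\<^sub>R e) ` {0<..}. 2 *\<^sub>R M \<le> v"
  proof
    fix v assume "v \<in> (\<lambda>t. t *\<^sub>R e) ` {0<..}"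
    then obtain t where t: "0 < t" "v = t *\<^sub>R e" by auto
    have "M \<le> (t / 2) *\<^sub>R e" unfolding M_def using t by (intro cInf_lower[OF _ bdd]) auto
    hence "2 *\<^sub>R M \<le> 2 *\<^sub>R ((t / 2) *\<^sub>R e)" by (rule scaleR_left_mono) simp
    thus "2 *\<^sub>R M \<le> v" using t by simp
  qed
  have "2 *\<^sub>R M \<le> Inf ((\<lambda>t. t *\<^sub>R e) ` {0<..})" using h2 by (intro cInf_greatest[OF ne]) blast
  hence "2 *\<^sub>R M \<le> M" by (simp only: M_def[symmetric])
  hence "M + M \<le> M" by (simp only: scaleR_2)
  hence "M \<le> 0" by simp
  thus ?thesis using dM by simp
qed

lemma Sup_neg_translate:
  fixes A :: "'a::{lattice_ab_group_add, conditionally_complete_lattice} set"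
  assumes ne: "A \<noteq> {}" and bdd: "bdd_below A"
  shows "Sup ((\<lambda>v. c - v) ` A) = c - Inf A"
proof (rule order_antisym)
  show "Sup ((\<lambda>v. c - v) ` A) \<le> c - Inf A"
    using ne by (rule cSUP_least) (auto intro: diff_left_mono cInf_lower[OF _ bdd])
  obtain m where m: "\<forall>v\<in>A. m \<le> v" using bdd by (auto simp: bdd_below_def)
  have bi: "bdd_above ((\<lambda>v. c - v) ` A)" using m by (intro bdd_aboveI[of _ "c - m"]) (auto intro: diff_left_mono)
  have "\<forall>v\<in>A. c - Sup ((\<lambda>v. c - v) ` A) \<le> v"
    using cSUP_upper[OF _ bi] by (metis diff_le_eq add.commute le_diff_eq)
  hence "c - Sup ((\<lambda>v. c - v) ` A) \<le> Inf A" using ne by (intro cInf_greatest) auto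
  thus "c - Inf A \<le> Sup ((\<lambda>v. c - v) ` A)" by (metis diff_le_eq add.commute le_diff_eq)
qed

lemma Inf_neg_translate:
  fixes A :: "'a::{lattice_ab_group_add, conditionally_complete_lattice} set"
  assumes ne: "A \<noteq> {}" and bdd: "bdd_above A"
  shows "Inf ((\<lambda>v. c - v) ` A) = c - Sup A"
proof (rule order_antisym)
  show "c - Sup A \<le> Inf ((\<lambda>v. c - v) ` A)"
    using ne by (rule cINF_greatest) (auto intro: diff_left_mono cSup_upper[OF _ bdd])
  obtain m where m: "\<forall>v\<in>A. v \<le> m" using bdd by (auto simp: bdd_above_def)
  have bi: "bdd_below ((\<lambda>v. c - v) ` A)" using m by (intro bdd_belowI[of _ "c - m"]) (auto intro: diff_left_mono)
  have "\<forall>v\<in>A. v \<le> c - Inf ((\<lambda>v. c - v) ` A)"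
    using cINF_lower[OF bi] by (metis diff_le_eq add.commute le_diff_eq)
  hence "Sup A \<le> c - Inf ((\<lambda>v. c - v) ` A)" using ne by (intro cSup_least) auto
  thus "Inf ((\<lambda>v. c - v) ` A) \<le> c - Sup A" by (metis diff_le_eq add.commute le_diff_eq)
qed

lemma pprt_disj: "ldisj (pprt (x::'a::lattice_ab_group_add)) (pprt (-x))"
proof -
  have "pprt x = x + pprt (-x)" unfolding pprt_def by (simp add: add_sup_distrib_left sup.commute)
  hence a: "pprt x = pprt (-x) + x" by (simp only: add.commute)
  have "inf (pprt x) (pprt (-x)) = inf (pprt (-x) + x) (pprt (-x) + 0)" by (simp only: a add_0_right)
  also have "\<dots> = pprt (-x) + inf x 0" by (rule add_inf_distrib_left[symmetric])
  also have "inf x 0 = - pprt (-x)" unfolding pprt_def using inf_eq_neg_sup[of x 0] by simp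
  also have "pprt (-x) + - pprt (-x) = 0" by simp
  finally show ?thesis by (simp add: ldisj_pos)
qed

context ST
begin

definition Aset :: "'e \<Rightarrow> real \<Rightarrow> 'f set" where
  "Aset x \<epsilon> = {\<rho> (T y) + (T x - \<rho> (T x)) | y \<rho>.
     y \<in> fragments x \<and> \<rho> \<in> band_projections \<and> \<rho> (S (x - y)) \<le> \<epsilon> *\<^sub>R S x}"

definition Iv :: "'e \<Rightarrow> real \<Rightarrow> 'f" where "Iv x \<epsilon> = Inf (Aset x \<epsilon>)"

lemma S_frag_le: "y \<in> lfrag x \<Longrightarrow> S (x - y) \<le> S x"
  using U_frag[OF S, of y x] Spos by (metis add_increasing order_refl)

lemma A_T: "0 < \<epsilon> \<Longrightarrow> T x \<in> Aset x \<epsilon>"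
proof -
  assume e: "0 < \<epsilon>"
  have "(\<lambda>x. x) (S (x - x)) \<le> \<epsilon> *\<^sub>R S x" using U_zero[OF S] e Spos by (simp add: scaleR_nonneg_nonneg)
  moreover have "x \<in> fragments x" by (simp add: fragments_lfrag lfrag_self)
  ultimately show ?thesis unfolding Aset_def using bp_id
    by (intro CollectI exI[of _ x] exI[of _ "\<lambda>x. x"]) simp
qed

lemma A_nonneg: "v \<in> Aset x \<epsilon> \<Longrightarrow> 0 \<le> v"
proof -
  assume "v \<in> Aset x \<epsilon>"
  then obtain y \<rho> where "\<rho> \<in> band_projections" "v = \<rho> (T y) + (T x - \<rho> (T x))" by (auto simp: Aset_def)
  thus "0 \<le> v" using bp_nonneg[of \<rho> "T y"] bp_le[of \<rho> "T x"] Tpos by (simp add: add_nonneg_nonneg)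
qed

lemma A_bdd: "bdd_below (Aset x \<epsilon>)" using A_nonneg by (intro bdd_belowI[of _ 0]) auto

lemma Iv_le_T: "0 < \<epsilon> \<Longrightarrow> Iv x \<epsilon> \<le> T x"
  unfolding Iv_def by (rule cInf_lower[OF A_T A_bdd])

lemma Iv_nonneg:
  assumes e: "0 < \<epsilon>" shows "0 \<le> Iv x \<epsilon>"
  unfolding Iv_def
proof (rule cInf_greatest)
  show "Aset x \<epsilon> \<noteq> {}" using A_T[OF e] by auto
  fix v assume "v \<in> Aset x \<epsilon>" thus "0 \<le> v" by (rule A_nonneg)
qed

lemma Iv_ne: "Iv x ` {0<..} \<noteq> {}" by auto
lemma Iv_bdd: "bdd_above (Iv x ` {0<..})" using Iv_le_T by (intro bdd_aboveI[of _ "T x"]) auto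

lemma Iv_lower:
  assumes e: "0 < \<epsilon>"
  shows "Qn S T n x - (real n * \<epsilon>) *\<^sub>R S x \<le> Iv x \<epsilon>"
  unfolding Iv_def
proof (rule cInf_greatest)
  show "Aset x \<epsilon> \<noteq> {}" using A_T[OF e] by auto
  fix v assume "v \<in> Aset x \<epsilon>"
  then obtain y \<rho> where y: "y \<in> lfrag x" and r: "\<rho> \<in> band_projections"
    and adm: "\<rho> (S (x - y)) \<le> \<epsilon> *\<^sub>R S x" and v: "v = \<rho> (T y) + (T x - \<rho> (T x))"
    by (auto simp: Aset_def fragments_lfrag)
  note Q = Qn_in[of n]
  have Tx: "T x = T y + T (x - y)" using U_frag[OF T y] .
  have Qx: "Qn S T n x = Qn S T n y + Qn S T n (x - y)" using U_frag[OF Q y] .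
  have v2: "v = T x - \<rho> (T (x - y))" using v Tx bp_add[OF r, of "T y" "T (x - y)"] by simp
  have s: "\<rho> (T (x - y)) = \<rho> (Qn S T n (x - y)) + \<rho> (T (x - y) - Qn S T n (x - y))"
    using bp_add[OF r, of "Qn S T n (x - y)" "T (x - y) - Qn S T n (x - y)"] by simp
  have a1: "\<rho> (Qn S T n (x - y)) \<le> (real n * \<epsilon>) *\<^sub>R S x"
  proof -
    have "\<rho> (Qn S T n (x - y)) \<le> \<rho> (real n *\<^sub>R S (x - y))" using bp_mono[OF r Qn_le_S] .
    also have "\<dots> = real n *\<^sub>R \<rho> (S (x - y))" by (rule bp_scale[OF r])
    also have "\<dots> \<le> real n *\<^sub>R (\<epsilon> *\<^sub>R S x)" using adm by (rule scaleR_left_mono) simp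
    finally show ?thesis by simp
  qed
  have a2: "\<rho> (T (x - y) - Qn S T n (x - y)) \<le> T x - Qn S T n x"
  proof -
    have "\<rho> (T (x - y) - Qn S T n (x - y)) \<le> T (x - y) - Qn S T n (x - y)"
      using Qn_le_T by (intro bp_le[OF r]) simp
    also have "\<dots> \<le> T x - Qn S T n x" using Tx Qx Qn_le_T[of n y] by (simp add: algebra_simps)
    finally show ?thesis .
  qed
  have "\<rho> (T (x - y)) \<le> (real n * \<epsilon>) *\<^sub>R S x + (T x - Qn S T n x)" unfolding s using a1 a2 by (rule add_mono)
  thus "Qn S T n x - (real n * \<epsilon>) *\<^sub>R S x \<le> v" unfolding v2 by (simp add: algebra_simps)
qed

lemma PP_le_Sup: "PP S T x \<le> Sup (Iv x ` {0<..})"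
  unfolding PP_def
proof (rule cSUP_least)
  show "(UNIV::nat set) \<noteq> {}" by simp
  fix n assume "n \<in> (UNIV::nat set)"
  define d where "d = Qn S T n x - Sup (Iv x ` {0<..})"
  have "\<forall>t>0. d \<le> t *\<^sub>R S x"
  proof (intro allI impI)
    fix t :: real assume t: "0 < t"
    have sup0: "0 \<le> Sup (Iv x ` {0<..})"
      using Iv_nonneg[of 1 x] cSUP_upper[OF _ Iv_bdd, of 1] by (auto intro: order.trans)
    show "d \<le> t *\<^sub>R S x"
    proof (cases "n = 0")
      case True
      hence "Qn S T n x \<le> 0" using Qn_le_S[of n x] by simp
      hence "d \<le> 0" using sup0 by (simp add: d_def)
      thus ?thesis using t Spos by (metis order.trans scaleR_nonneg_nonneg less_imp_le)
    next
      case False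
      define \<epsilon> where "\<epsilon> = t / real n"
      have e: "0 < \<epsilon>" using t False by (simp add: \<epsilon>_def)
      have ne: "real n * \<epsilon> = t" using False by (simp add: \<epsilon>_def)
      have "Qn S T n x - t *\<^sub>R S x \<le> Iv x \<epsilon>" using Iv_lower[OF e, of n x] ne by simp
      also have "\<dots> \<le> Sup (Iv x ` {0<..})" using e by (intro cSUP_upper[OF _ Iv_bdd]) simp
      finally show ?thesis by (simp add: d_def algebra_simps)
    qed
  qed
  hence "d \<le> 0" using Spos by (intro archimedean_F) auto
  thus "Qn S T n x \<le> Sup (Iv x ` {0<..})" by (simp add: d_def)
qed

lemma W_zero:
  assumes "\<forall>y\<in>lfrag x. c \<le> DD y + S (x - y)"
  shows "c \<le> 0"
proof -
  have "c \<le> infU DD S x" unfolding infU_def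
    using assms by (intro cInf_greatest[OF infU_ne[OF DD_in S]]) auto
  thus ?thesis using DS_zero by simp
qed

lemma star:
  assumes e: "0 < \<epsilon>" and y: "y \<in> lfrag x" and r: "\<rho> \<in> band_projections"
    and adm: "\<rho> (S (x - y)) \<le> \<epsilon> *\<^sub>R S x"
  shows "pprt (Iv x \<epsilon> - PP S T x) \<le> \<rho> (DD y) + (DD x - \<rho> (DD x))"
proof -
  let ?R = "\<rho> (DD y) + (DD x - \<rho> (DD x))"
  have R0: "0 \<le> ?R" using bp_nonneg[OF r DD_nonneg] bp_le[OF r DD_nonneg] by (simp add: add_nonneg_nonneg)
  have "\<rho> (T y) + (T x - \<rho> (T x)) \<in> Aset x \<epsilon>"
    unfolding Aset_def using y r adm by (auto simp: fragments_lfrag)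
  hence Iv: "Iv x \<epsilon> \<le> \<rho> (T y) + (T x - \<rho> (T x))" unfolding Iv_def by (rule cInf_lower[OF _ A_bdd])
  have Tx: "T x = T y + T (x - y)" using U_frag[OF T y] .
  have Dx: "DD x = DD y + DD (x - y)" using U_frag[OF DD_in y] .
  have e1: "\<rho> (T y) + (T x - \<rho> (T x)) - PP S T x = DD x - \<rho> (T (x - y))"
    using Tx bp_add[OF r, of "T y" "T (x - y)"] by (simp add: algebra_simps)
  have h: "\<rho> (DD x) = \<rho> (DD y) + \<rho> (DD (x - y))"
    by (subst Dx) (rule bp_add[OF r])
  have e2: "?R = DD x - \<rho> (DD (x - y))"
    using h by (simp add: algebra_simps)
  have mo: "\<rho> (DD (x - y)) \<le> \<rho> (T (x - y))" using PP_nonneg by (intro bp_mono[OF r]) simp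
  have "Iv x \<epsilon> - PP S T x \<le> (\<rho> (T y) + (T x - \<rho> (T x))) - PP S T x" using Iv by (rule diff_right_mono)
  also have "\<dots> = DD x - \<rho> (T (x - y))" by (rule e1)
  also have "\<dots> \<le> DD x - \<rho> (DD (x - y))" using mo by (rule diff_left_mono)
  also have "\<dots> = ?R" by (rule e2[symmetric])
  finally have "Iv x \<epsilon> - PP S T x \<le> ?R" .
  thus ?thesis using R0 by (simp add: pprt_def)
qed

lemma R_proj:
  assumes r: "\<rho> \<in> band_projections"
  shows "\<rho> (\<rho> (DD y) + (DD x - \<rho> (DD x))) \<le> DD y"
proof -
  have "\<rho> (\<rho> (DD y) + (DD x - \<rho> (DD x))) = \<rho> (DD y)"
    using bp_add[OF r] bp_idem[OF r] bp_compl[OF r] by simp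
  also have "\<dots> \<le> DD y" using bp_le[OF r DD_nonneg] .
  finally show ?thesis .
qed

lemma Iv_le_PP:
  assumes e: "0 < \<epsilon>"
  shows "Iv x \<epsilon> \<le> PP S T x"
proof -
  define b where "b = pprt (Iv x \<epsilon> - PP S T x)"
  have b0: "0 \<le> b" by (simp add: b_def)
  have Sx0: "0 \<le> S x" using Spos by simp
  define c where "c = inf b (S x)"
  have c0: "0 \<le> c" using b0 Sx0 by (simp add: c_def)
  have "\<forall>y\<in>lfrag x. (\<epsilon> / (\<epsilon> + 1)) *\<^sub>R c \<le> DD y + S (x - y)"
  proof
    fix y assume y: "y \<in> lfrag x"
    define g where "g = \<epsilon> *\<^sub>R S x - S (x - y)"
    obtain \<rho> where r: "\<rho> \<in> band_projections" and ru: "\<rho> (pprt (-g)) = 0"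
      and rz: "\<forall>z. ldisj z (pprt (-g)) \<longrightarrow> \<rho> z = z"
      using bp_exists[of "pprt (-g)"] by auto
    have rg: "\<rho> g = pprt g"
      using bp_diff[OF r, of "pprt g" "pprt (-g)"] pprt_split[of g] ru rz pprt_disj[of g] by simp
    have adm: "\<rho> (S (x - y)) \<le> \<epsilon> *\<^sub>R S x"
    proof -
      have "\<rho> g = \<rho> (\<epsilon> *\<^sub>R S x) - \<rho> (S (x - y))" unfolding g_def by (rule bp_diff[OF r])
      hence "0 \<le> \<rho> (\<epsilon> *\<^sub>R S x) - \<rho> (S (x - y))" using rg by (metis zero_le_pprt)
      hence "\<rho> (S (x - y)) \<le> \<rho> (\<epsilon> *\<^sub>R S x)" by simp
      also have "\<dots> \<le> \<epsilon> *\<^sub>R S x" using e Sx0 by (intro bp_le[OF r] scaleR_nonneg_nonneg) auto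
      finally show ?thesis .
    qed
    have sig: "\<epsilon> *\<^sub>R (S x - \<rho> (S x)) \<le> S (x - y)"
    proof -
      have gs: "g = pprt g - pprt (-g)" by (rule pprt_split)
      have "g - \<rho> g = (pprt g - pprt (-g)) - pprt g" by (simp only: rg gs[symmetric])
      also have "\<dots> = - pprt (-g)" by simp
      finally have "g - \<rho> g = - pprt (-g)" .
      hence "g - \<rho> g \<le> 0" by simp
      hence "\<epsilon> *\<^sub>R S x - \<rho> (\<epsilon> *\<^sub>R S x) \<le> S (x - y) - \<rho> (S (x - y))"
        unfolding g_def bp_diff[OF r] by (simp add: algebra_simps)
      also have "\<dots> \<le> S (x - y)" using bp_nonneg[OF r] Spos by simp
      finally show ?thesis using bp_scale[OF r] by (simp add: algebra_simps)
    qed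
    have st: "b \<le> \<rho> (DD y) + (DD x - \<rho> (DD x))" unfolding b_def by (rule star[OF e y r adm])
    have rc: "\<rho> c \<le> DD y"
    proof -
      have "\<rho> c \<le> \<rho> b" using bp_mono[OF r] by (simp add: c_def)
      also have "\<dots> \<le> \<rho> (\<rho> (DD y) + (DD x - \<rho> (DD x)))" using bp_mono[OF r st] .
      also have "\<dots> \<le> DD y" by (rule R_proj[OF r])
      finally show ?thesis .
    qed
    have sc: "c - \<rho> c \<le> S x - \<rho> (S x)"
    proof -
      have "c \<le> S x" by (simp add: c_def)
      hence "0 \<le> S x - c" by (simp only: diff_ge_0_iff_ge)
      hence "\<rho> (S x - c) \<le> S x - c" by (rule bp_le[OF r])
      thus ?thesis using bp_diff[OF r, of "S x" c] by (simp add: algebra_simps)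
    qed
    have "\<epsilon> *\<^sub>R c = \<epsilon> *\<^sub>R \<rho> c + \<epsilon> *\<^sub>R (c - \<rho> c)" by (simp add: algebra_simps)
    also have "\<dots> \<le> \<epsilon> *\<^sub>R DD y + S (x - y)"
    proof (rule add_mono)
      show "\<epsilon> *\<^sub>R \<rho> c \<le> \<epsilon> *\<^sub>R DD y" using rc e by (intro scaleR_left_mono) auto
      have "\<epsilon> *\<^sub>R (c - \<rho> c) \<le> \<epsilon> *\<^sub>R (S x - \<rho> (S x))" using sc e by (intro scaleR_left_mono) auto
      thus "\<epsilon> *\<^sub>R (c - \<rho> c) \<le> S (x - y)" using sig by (rule order.trans)
    qed
    also have "\<dots> \<le> (\<epsilon> + 1) *\<^sub>R (DD y + S (x - y))"
    proof -
      have "\<epsilon> *\<^sub>R DD y \<le> (\<epsilon> + 1) *\<^sub>R DD y" using DD_nonneg by (intro scaleR_right_mono) auto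
      moreover have "S (x - y) \<le> (\<epsilon> + 1) *\<^sub>R S (x - y)"
        using scaleR_right_mono[of 1 "\<epsilon> + 1" "S (x - y)"] e Spos by simp
      ultimately show ?thesis by (simp add: scaleR_add_right add_mono)
    qed
    finally have "\<epsilon> *\<^sub>R c \<le> (\<epsilon> + 1) *\<^sub>R (DD y + S (x - y))" .
    hence "inverse (\<epsilon> + 1) *\<^sub>R (\<epsilon> *\<^sub>R c) \<le> inverse (\<epsilon> + 1) *\<^sub>R ((\<epsilon> + 1) *\<^sub>R (DD y + S (x - y)))"
      using e by (intro scaleR_left_mono) auto
    thus "(\<epsilon> / (\<epsilon> + 1)) *\<^sub>R c \<le> DD y + S (x - y)" using e by (simp add: divide_inverse_commute)
  qed
  hence "(\<epsilon> / (\<epsilon> + 1)) *\<^sub>R c \<le> 0" by (rule W_zero)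
  moreover have pos: "0 < \<epsilon> / (\<epsilon> + 1)" using e by simp
  ultimately have "c \<le> 0" using scaleR_le_0_iff[of "\<epsilon> / (\<epsilon> + 1)" c] by auto
  hence cz: "inf b (S x) = 0" unfolding c_def using c0[unfolded c_def] by (rule order_antisym)
  obtain \<rho> where r: "\<rho> \<in> band_projections" and ru: "\<rho> (S x) = 0"
    and rz: "\<forall>z. ldisj z (S x) \<longrightarrow> \<rho> z = z"
    using bp_exists[OF Sx0] by auto
  have rb: "\<rho> b = b" using rz cz b0 Sx0 by (simp add: ldisj_pos)
  have "\<forall>y\<in>lfrag x. b \<le> DD y + S (x - y)"
  proof
    fix y assume y: "y \<in> lfrag x"
    have "\<rho> (S (x - y)) \<le> \<rho> (S x)" using bp_mono[OF r S_frag_le[OF y]] .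
    moreover have "0 \<le> \<epsilon> *\<^sub>R S x" using e Sx0 by (simp add: scaleR_nonneg_nonneg)
    ultimately have adm: "\<rho> (S (x - y)) \<le> \<epsilon> *\<^sub>R S x" using ru by simp
    have "b = \<rho> b" using rb by simp
    also have "\<dots> \<le> \<rho> (\<rho> (DD y) + (DD x - \<rho> (DD x)))" unfolding b_def by (rule bp_mono[OF r star[OF e y r adm]])
    also have "\<dots> \<le> DD y" by (rule R_proj[OF r])
    also have "\<dots> \<le> DD y + S (x - y)" using Spos by (simp add: add_increasing2)
    finally show "b \<le> DD y + S (x - y)" .
  qed
  hence "b \<le> 0" by (rule W_zero)
  hence "Iv x \<epsilon> - PP S T x \<le> 0" unfolding b_def by (simp add: pprt_def)
  thus ?thesis by simp
qed

lemma PP_formula: "PP S T x = Sup (Iv x ` {0<..})"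
proof (rule order_antisym)
  show "PP S T x \<le> Sup (Iv x ` {0<..})" by (rule PP_le_Sup)
  show "Sup (Iv x ` {0<..}) \<le> PP S T x" using Iv_le_PP by (intro cSUP_least) auto
qed

definition Bset :: "'e \<Rightarrow> real \<Rightarrow> 'f set" where
  "Bset x \<epsilon> = {\<rho> (T y) | y \<rho>. y \<in> fragments x \<and> \<rho> \<in> band_projections \<and> \<rho> (S y) \<le> \<epsilon> *\<^sub>R S x}"

lemma Bset_eq: "Bset x \<epsilon> = (\<lambda>v. T x - v) ` Aset x \<epsilon>"
proof (intro set_eqI iffI)
  fix w assume "w \<in> Bset x \<epsilon>"
  then obtain y \<rho> where y: "y \<in> lfrag x" and r: "\<rho> \<in> band_projections"
    and adm: "\<rho> (S y) \<le> \<epsilon> *\<^sub>R S x" and w: "w = \<rho> (T y)" by (auto simp: Bset_def fragments_lfrag)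
  have y': "x - y \<in> lfrag x" using y by (rule lfrag_compl)
  have "T x = T (x - y) + T y" using U_frag[OF T y] by (simp add: add.commute)
  hence "w = T x - (\<rho> (T (x - y)) + (T x - \<rho> (T x)))"
    using w bp_add[OF r, of "T (x - y)" "T y"] by (simp add: algebra_simps)
  moreover have "\<rho> (T (x - y)) + (T x - \<rho> (T x)) \<in> Aset x \<epsilon>"
    unfolding Aset_def using y' r adm
    by (intro CollectI exI[of _ "x - y"] exI[of _ \<rho>]) (simp add: fragments_lfrag)
  ultimately show "w \<in> (\<lambda>v. T x - v) ` Aset x \<epsilon>" by blast
next
  fix w assume "w \<in> (\<lambda>v. T x - v) ` Aset x \<epsilon>"
  then obtain y \<rho> where y: "y \<in> lfrag x" and r: "\<rho> \<in> band_projections"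
    and adm: "\<rho> (S (x - y)) \<le> \<epsilon> *\<^sub>R S x" and w: "w = T x - (\<rho> (T y) + (T x - \<rho> (T x)))"
    by (auto simp: Aset_def fragments_lfrag)
  have y': "x - y \<in> lfrag x" using y by (rule lfrag_compl)
  have "T x = T y + T (x - y)" using U_frag[OF T y] .
  hence "w = \<rho> (T (x - y))" using w bp_add[OF r, of "T y" "T (x - y)"] by (simp add: algebra_simps)
  thus "w \<in> Bset x \<epsilon>" unfolding Bset_def using y' r adm by (auto simp: fragments_lfrag)
qed

lemma DD_formula: "DD x = Inf ((\<lambda>\<epsilon>. Sup (Bset x \<epsilon>)) ` {0<..})"
proof -
  have "\<forall>\<epsilon>\<in>{0<..}. Sup (Bset x \<epsilon>) = T x - Iv x \<epsilon>"
  proof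
    fix \<epsilon> :: real assume "\<epsilon> \<in> {0<..}"
    hence "Aset x \<epsilon> \<noteq> {}" using A_T by auto
    thus "Sup (Bset x \<epsilon>) = T x - Iv x \<epsilon>" unfolding Bset_eq Iv_def
      by (rule Sup_neg_translate[OF _ A_bdd])
  qed
  hence "(\<lambda>\<epsilon>. Sup (Bset x \<epsilon>)) ` {0<..} = (\<lambda>v. T x - v) ` (Iv x ` {0<..})"
    by (auto simp: image_image intro!: image_cong)
  hence "Inf ((\<lambda>\<epsilon>. Sup (Bset x \<epsilon>)) ` {0<..}) = T x - Sup (Iv x ` {0<..})"
    using Inf_neg_translate[OF Iv_ne Iv_bdd] by simp
  thus ?thesis using PP_formula by simp
qed

end

theorem corollary3p5:
  fixes S T :: "'e::vector_lattice \<Rightarrow> 'f::{vector_lattice, conditionally_complete_lattice}"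
    and x :: 'e
  assumes "S \<in> UOp_pos" and "T \<in> UOp_pos"
  shows "(pi_S S T x =
           Sup ((\<lambda>\<epsilon>::real. Inf {\<rho> (T y) + (T x - \<rho> (T x)) | y \<rho>.
                   y \<in> fragments x \<and> \<rho> \<in> band_projections
                   \<and> \<rho> (S (x - y)) \<le> \<epsilon> *\<^sub>R S x}) ` {0<..})) \<and>
        (pi_S_perp S T x =
           Inf ((\<lambda>\<epsilon>::real. Sup {\<rho> (T y) | y \<rho>.
                   y \<in> fragments x \<and> \<rho> \<in> band_projections
                   \<and> \<rho> (S y) \<le> \<epsilon> *\<^sub>R S x}) ` {0<..}))"
proof -
  interpret ST S T using assms by unfold_locales (auto simp: UOp_pos_def)
  have 1: "pi_S S T x = PP S T x" by (simp add: piS_eq)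
  have 2: "pi_S_perp S T x = T x - PP S T x" by (simp add: piSperp_eq)
  show ?thesis
    unfolding 1 2 using PP_formula[of x] DD_formula[of x]
    by (simp add: Iv_def Aset_def Bset_def)
qed


end
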